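(* The growth rate of ternary square-free words satisfies \[ s\ge 65^{1/40}>1.109999. \] Equivalently, the number of square-free ternary words of length $n$ grows at least like $65^{n/40}$.
   Context: Let $\Sigma=\{0,1,2\}$. A word over $\Sigma$ is square-free if it cannot be written as $xyyz$ with $y$ nonempty. $a(n)$ is the number of square-free words of length $n$ over $\Sigma$, and $s=\lim_{n\to\infty}a(n)^{1/n}$ (this limit exists). *)

theory Defs
  imports "HOL-Analysis.Analysis"
begin

definition square_free :: "'a list \<Rightarrow> bool" where
  "square_free w \<longleftrightarrow> \<not> (\<exists>x y z. y \<noteq> [] \<and> w = x @ y @ y @ z)"

definition sqfree_count :: "nat \<Rightarrow> nat" where
  "sqfree_count n = card {w :: nat list. length w = n \<and> set w \<subseteq> {0,1,2} \<and> square_free w}"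

definition growth_rate :: real where
  "growth_rate = lim (\<lambda>n. real (sqfree_count n) powr (1 / real n))"

end

theory Submission
  imports Defs
begin


fun lcp :: "nat list \<Rightarrow> nat list \<Rightarrow> nat" where
  "lcp (x#xs) (y#ys) = (if x = y then Suc (lcp xs ys) else 0)"
| "lcp _ _ = 0"

lemma lcp_ge: "r \<le> length xs \<Longrightarrow> r \<le> length ys \<Longrightarrow> (\<forall>t<r. xs!t = ys!t) \<Longrightarrow> r \<le> lcp xs ys"
proof (induction xs arbitrary: ys r)
  case Nil then show ?case by simp
next
  case (Cons x xs)
  show ?case
  proof (cases r)
    case 0 then show ?thesis by simp
  next
    case (Suc r')
    then obtain y ys' where ys: "ys = y # ys'" using Cons.prems by (cases ys) auto
    have "x = y" using Cons.prems(3) Suc ys by force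
    moreover have "r' \<le> lcp xs ys'"
      using Cons.IH[of r' ys'] Cons.prems Suc ys by force
    ultimately show ?thesis using Suc ys by simp
  qed
qed

definition lcs :: "nat list \<Rightarrow> nat list \<Rightarrow> nat" where
  "lcs xs ys = lcp (rev xs) (rev ys)"

lemma lcs_ge:
  assumes "length xs = n" "length ys = n" "r \<le> n" "\<forall>t. r \<le> t \<longrightarrow> t < n \<longrightarrow> xs!t = ys!t"
  shows "n - r \<le> lcs xs ys"
  unfolding lcs_def
proof (rule lcp_ge)
  show "n - r \<le> length (rev xs)" "n - r \<le> length (rev ys)" using assms by auto
  show "\<forall>t<n - r. rev xs ! t = rev ys ! t"
  proof (intro allI impI)
    fix t assume t: "t < n - r"
    then have "rev xs ! t = xs ! (n - Suc t)" "rev ys ! t = ys ! (n - Suc t)"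
      using assms by (auto simp: rev_nth)
    moreover have "xs ! (n - Suc t) = ys ! (n - Suc t)" using assms(4) t by auto
    ultimately show "rev xs ! t = rev ys ! t" by simp
  qed
qed

definition sq_at :: "'a list \<Rightarrow> nat \<Rightarrow> nat \<Rightarrow> bool" where
  "sq_at xs p l \<longleftrightarrow> 0 < l \<and> p + 2*l \<le> length xs \<and> (\<forall>t<l. xs!(p+t) = xs!(p+l+t))"

lemma sq_at_not_sf: "sq_at xs p l \<Longrightarrow> \<not> square_free xs"
proof -
  assume a: "sq_at xs p l"
  define y where "y = take l (drop p xs)"
  have l: "0 < l" "p + 2*l \<le> length xs" and eq: "\<forall>t<l. xs!(p+t) = xs!(p+l+t)"
    using a by (auto simp: sq_at_def)
  have y2: "take l (drop (p+l) xs) = y"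
    unfolding y_def by (rule nth_equalityI) (use l eq in \<open>auto simp: add.commute add.left_commute\<close>)
  have "xs = take p xs @ drop p xs" by simp
  also have "drop p xs = y @ drop (p+l) xs"
    unfolding y_def by (metis append_take_drop_id drop_drop add.commute)
  also have "drop (p+l) xs = y @ drop (p+l+l) xs"
    using y2 by (metis append_take_drop_id drop_drop add.commute)
  finally have "xs = take p xs @ y @ y @ drop (p+l+l) xs" by simp
  moreover have "y \<noteq> []" unfolding y_def using l by auto
  ultimately show ?thesis unfolding square_free_def by blast
qed

lemma not_sf_sq_at: "\<not> square_free xs \<Longrightarrow> \<exists>p l. sq_at xs p l"
proof -
  assume "\<not> square_free xs"
  then obtain x y z where y: "y \<noteq> []" and xs: "xs = x @ y @ y @ z" unfolding square_free_def by blast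
  have "sq_at xs (length x) (length y)"
    unfolding sq_at_def using y xs by (auto simp: nth_append)
  then show ?thesis by blast
qed

lemma sf_iff: "square_free xs \<longleftrightarrow> \<not> (\<exists>p l. sq_at xs p l)"
  using sq_at_not_sf not_sf_sq_at by blast

lemma sq_at_factor:
  assumes "sq_at xs p l" "a \<le> p" "p + 2*l \<le> a + length S"
    and "\<forall>i. i < length S \<longrightarrow> a + i < length xs \<longrightarrow> S!i = xs!(a+i)"
  shows "sq_at S (p - a) l"
proof -
  have l: "0 < l" "p + 2*l \<le> length xs" and eq: "\<forall>t<l. xs!(p+t) = xs!(p+l+t)"
    using assms(1) by (auto simp: sq_at_def)
  show ?thesis unfolding sq_at_def
  proof (intro conjI allI impI)
    show "0 < l" "p - a + 2 * l \<le> length S" using l assms(2,3) by auto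
    fix t assume t: "t < l"
    have "S ! (p - a + t) = xs ! (p + t)" using assms(4)[rule_format, of "p - a + t"] assms(2,3) l t by auto
    moreover have "S ! (p - a + l + t) = xs ! (p + l + t)" using assms(4)[rule_format, of "p - a + l + t"] assms(2,3) l t by auto
    ultimately show "S ! (p - a + t) = S ! (p - a + l + t)" using eq t by simp
  qed
qed

lemma sf_append: "square_free (xs @ ys) \<Longrightarrow> square_free xs \<and> square_free ys"
  unfolding square_free_def
  by (metis append.assoc)


locale blk =
  fixes V :: "nat list list" and good :: "nat list list" and T :: "nat list" and s :: "nat list"
    and L q dl K :: nat and M :: "nat list"
  assumes lenV: "\<And>i. i < length V \<Longrightarrow> length (V!i) = L"
  and qpos: "0 < q" and qL: "q \<le> L" and lenM: "length M = q"
  and startM: "\<And>i. i < length V \<Longrightarrow> take q (V!i) = M"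
  and noM: "\<And>i p. i < length V \<Longrightarrow> 0 < p \<Longrightarrow> p < L \<Longrightarrow> take q (drop p (V!i @ take (q-1) M)) \<noteq> M"
  and sqfV: "\<And>i. i < length V \<Longrightarrow> square_free (V!i @ take (q-1) M)"
  and goodV: "\<And>x y. x < length V \<Longrightarrow> y \<in> set (good!x) \<Longrightarrow> y < length V \<and> y \<noteq> x"
  and cenok: "\<And>x y d l. x < length V \<Longrightarrow> y \<in> set (good!x) \<Longrightarrow> 0 < d \<Longrightarrow> d < q \<Longrightarrow> 0 < l
     \<Longrightarrow> l \<le> L + d \<Longrightarrow> L + d + l \<le> 2*L + q - 1
     \<Longrightarrow> \<not> (\<forall>t<l. (V!x @ V!y @ take (q-1) M) ! (L+d-l+t) = (V!x @ V!y @ take (q-1) M) ! (L+d+t))"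
  and distV: "distinct V"
  and gooddist: "\<And>x. x < length V \<Longrightarrow> distinct (good!x) \<and> dl \<le> length (good!x)"
  and dlN: "dl \<le> length V"
  and Tok: "\<And>y z. y < length V \<Longrightarrow> z \<in> set (good!y) \<Longrightarrow> lcp (V!y) (V!z) \<le> T!y"
  and LSok: "\<And>x y. x < length V \<Longrightarrow> y \<in> set (good!x) \<Longrightarrow> lcs (V!x) (V!y) + T!y < L"
  and sok: "\<And>x y. x < length V \<Longrightarrow> y < length V \<Longrightarrow> x \<noteq> y \<Longrightarrow> lcs (V!x) (V!y) \<le> s!y"
  and Kok: "\<And>y. y < length V \<Longrightarrow> card {z. z < length V \<and> take (L - s!y) (V!z) = take (L - s!y) (V!y)} \<le> K"
  and letters: "\<And>i. i < length V \<Longrightarrow> set (V!i) \<subseteq> {0,1,2}"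
begin

abbreviation "N \<equiv> length V"

definition H :: "nat list \<Rightarrow> nat list" where
  "H w = concat (map (\<lambda>i. V!i) w)"

definition lets :: "nat list \<Rightarrow> bool" where
  "lets w \<longleftrightarrow> (\<forall>x\<in>set w. x < N)"

definition chain :: "nat list \<Rightarrow> bool" where
  "chain w \<longleftrightarrow> (\<forall>i. Suc i < length w \<longrightarrow> w!Suc i \<in> set (good!(w!i)))"

definition Wn :: "nat \<Rightarrow> nat list set" where
  "Wn n = {w. length w = n \<and> lets w \<and> chain w \<and> square_free (H w)}"

definition Ext :: "nat list \<Rightarrow> nat set" where
  "Ext w = (if w = [] then {..<N} else set (good!(last w)))"

definition Compat :: "nat \<Rightarrow> nat set" where
  "Compat y = {z. z < N \<and> take (L - s!y) (V!z) = take (L - s!y) (V!y)}"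

definition occ :: "nat list \<Rightarrow> nat \<Rightarrow> bool" where
  "occ xs P \<longleftrightarrow> P + q \<le> length xs \<and> (\<forall>t<q. xs!(P+t) = M!t)"

lemma H_simps[simp]: "H [] = []" "H (a#w) = V!a @ H w" "H (w @ v) = H w @ H v"
  by (auto simp: H_def)

lemma length_H: "lets w \<Longrightarrow> length (H w) = length w * L"
  by (induction w) (auto simp: lets_def lenV)

lemma nth_H: "lets w \<Longrightarrow> m < length w \<Longrightarrow> t < L \<Longrightarrow> H w ! (m*L + t) = V!(w!m)!t"
proof (induction w arbitrary: m)
  case Nil then show ?case by simp
next
  case (Cons a w)
  have a: "a < N" and lw: "lets w" using Cons.prems by (auto simp: lets_def)
  show ?case
  proof (cases m)
    case 0 then show ?thesis using Cons.prems a by (auto simp: nth_append lenV)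
  next
    case (Suc m')
    have "H (a#w) ! (m*L + t) = H w ! (m'*L + t)"
      using Suc a by (auto simp: nth_append lenV)
    then show ?thesis using Cons.IH[OF lw, of m'] Cons.prems Suc by auto
  qed
qed

lemma VM: "i < N \<Longrightarrow> t < q \<Longrightarrow> V!i!t = M!t"
  using startM[of i] qL lenV[of i] by (metis nth_take)

lemma nth_H_M: "lets w \<Longrightarrow> m < length w \<Longrightarrow> t < q \<Longrightarrow> H w ! (m*L + t) = M!t"
  using nth_H[of w m t] VM[of "w!m" t] qL by (auto simp: lets_def)

lemma occ_block: "lets w \<Longrightarrow> m < length w \<Longrightarrow> occ (H w) (m*L)"
proof -
  assume a: "lets w" "m < length w"
  have "m*L + q \<le> length w * L"
  proof -
    have "Suc m * L \<le> length w * L" using a(2) by (intro mult_le_mono1) simp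
    then show ?thesis using qL by simp
  qed
  then show ?thesis unfolding occ_def using a nth_H_M length_H by auto
qed

lemma window1:
  assumes w: "lets w" and m: "m < length w"
  shows "\<forall>i. i < length (V!(w!m) @ take (q-1) M) \<longrightarrow> m*L + i < length (H w)
           \<longrightarrow> (V!(w!m) @ take (q-1) M)!i = H w ! (m*L + i)"
proof (intro allI impI)
  fix i assume i: "i < length (V!(w!m) @ take (q-1) M)" and ib: "m*L + i < length (H w)"
  have wm: "w!m < N" using w m by (auto simp: lets_def)
  show "(V!(w!m) @ take (q-1) M)!i = H w ! (m*L + i)"
  proof (cases "i < L")
    case True then show ?thesis using nth_H[OF w m True] wm by (simp add: nth_append lenV)
  next
    case False
    have iq: "i - L < q - 1" using i False wm lenM by (simp add: lenV)
    have "Suc m < length w"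
    proof (rule ccontr)
      assume "\<not> Suc m < length w"
      then have "length w \<le> Suc m" by simp
      then have "length w * L \<le> Suc m * L" by (rule mult_le_mono1)
      then show False using ib False length_H[OF w] by simp
    qed
    then have "H w ! (Suc m * L + (i - L)) = M!(i - L)" using nth_H_M[OF w, of "Suc m" "i - L"] iq by simp
    moreover have "Suc m * L + (i - L) = m*L + i" using False by simp
    ultimately show ?thesis using False wm iq lenM by (simp add: nth_append lenV)
  qed
qed

lemma sync:
  assumes w: "lets w" and o: "occ (H w) P"
  shows "L dvd P"
proof (rule ccontr)
  assume nd: "\<not> L dvd P"
  define m r where "m = P div L" and "r = P mod L"
  have P: "P = m*L + r" unfolding m_def r_def by simp
  have r: "0 < r" "r < L" using nd qpos qL unfolding r_def by (auto simp: dvd_eq_mod_eq_0)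
  have Pl: "P + q \<le> length w * L" using o length_H[OF w] by (simp add: occ_def)
  have m: "m < length w"
  proof (rule ccontr)
    assume "\<not> m < length w"
    then have "length w * L \<le> m * L" by (intro mult_le_mono1) simp
    then show False using Pl P qpos by linarith
  qed
  have wm: "w!m < N" using w m by (auto simp: lets_def)
  let ?S = "V!(w!m) @ take (q-1) M"
  have lS: "length ?S = L + q - 1" using wm lenM qpos by (simp add: lenV)
  have "take q (drop r ?S) = M"
  proof (rule nth_equalityI)
    show "length (take q (drop r ?S)) = length M" using lS r lenM qpos by simp
    fix t assume "t < length (take q (drop r ?S))"
    then have t: "t < q" using lenM by simp
    have "take q (drop r ?S) ! t = drop r ?S ! t" by (rule nth_take[OF t])
    also have "\<dots> = ?S ! (r + t)" by (rule nth_drop) (use lS r in simp)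
    also have "\<dots> = H w ! (m*L + (r + t))"
      using window1[OF w m] t lS r Pl P by (simp add: length_H[OF w])
    also have "\<dots> = M ! t" using o t P by (simp add: occ_def add.assoc)
    finally show "take q (drop r ?S) ! t = M ! t" .
  qed
  then show False using noM[OF wm r] by simp
qed


lemma window2:
  assumes w: "lets w" and k: "Suc k < length w"
  shows "\<forall>i. i < length (V!(w!k) @ V!(w!Suc k) @ take (q-1) M) \<longrightarrow> k*L + i < length (H w)
           \<longrightarrow> (V!(w!k) @ V!(w!Suc k) @ take (q-1) M)!i = H w ! (k*L + i)"
proof (intro allI impI)
  fix i assume i: "i < length (V!(w!k) @ V!(w!Suc k) @ take (q-1) M)" and ib: "k*L + i < length (H w)"
  have wk: "w!k < N" "w!Suc k < N" using w k by (auto simp: lets_def)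
  have k0: "k < length w" using k by simp
  have lk: "length (V!(w!k)) = L" using lenV[OF wk(1)] .
  show "(V!(w!k) @ V!(w!Suc k) @ take (q-1) M)!i = H w ! (k*L + i)"
  proof (cases "i < L")
    case True
    have "H w ! (k*L + i) = V!(w!k)!i" by (rule nth_H[OF w k0 True])
    moreover have "(V!(w!k) @ V!(w!Suc k) @ take (q-1) M)!i = V!(w!k)!i"
      using True lk by (simp add: nth_append)
    ultimately show ?thesis by simp
  next
    case False
    have e: "k*L + i = Suc k * L + (i - L)" using False by simp
    have i2: "i - L < length (V!(w!Suc k) @ take (q-1) M)" using i lk False by simp
    have ib2: "Suc k * L + (i - L) < length (H w)" using ib e by simp
    have "(V!(w!Suc k) @ take (q-1) M)!(i - L) = H w ! (Suc k * L + (i - L))"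
      using window1[OF w k] i2 ib2 by blast
    moreover have "(V!(w!k) @ V!(w!Suc k) @ take (q-1) M)!i = (V!(w!Suc k) @ take (q-1) M)!(i - L)"
      using False lk by (simp add: nth_append)
    ultimately show ?thesis using e by simp
  qed
qed

lemma occ_shift_right:
  assumes sq: "sq_at xs p l" and o: "occ xs b" and b: "p \<le> b" "b + q \<le> p + l"
  shows "occ xs (b + l)"
proof -
  have l: "p + 2*l \<le> length xs" and eq: "\<forall>t<l. xs!(p+t) = xs!(p+l+t)" using sq by (auto simp: sq_at_def)
  show ?thesis unfolding occ_def
  proof (intro conjI allI impI)
    show "b + l + q \<le> length xs" using l b by simp
    fix t assume t: "t < q"
    have tl: "b - p + t < l" using t b by simp
    have A: "xs ! (p + (b - p + t)) = xs ! (p + l + (b - p + t))" using eq tl by blast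
    have e1: "p + (b - p + t) = b + t" and e2: "p + l + (b - p + t) = b + l + t" using b by auto
    from A have "xs ! (b + t) = xs ! (b + l + t)" by (simp only: e1 e2)
    then show "xs ! (b + l + t) = M ! t" using o t by (simp add: occ_def)
  qed
qed

lemma occ_shift_left:
  assumes sq: "sq_at xs p l" and o: "occ xs b" and b: "p + l \<le> b" "b + q \<le> p + 2*l"
  shows "occ xs (b - l)"
proof -
  have eq: "\<forall>t<l. xs!(p+t) = xs!(p+l+t)" using sq by (auto simp: sq_at_def)
  have bl: "b + q \<le> length xs" using o by (simp add: occ_def)
  show ?thesis unfolding occ_def
  proof (intro conjI allI impI)
    show "b - l + q \<le> length xs" using bl b by arith
    fix t assume t: "t < q"
    have tl: "b - l - p + t < l" using t b by arith
    have A: "xs ! (p + (b - l - p + t)) = xs ! (p + l + (b - l - p + t))" using eq tl by blast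
    have e1: "p + (b - l - p + t) = b - l + t" and e2: "p + l + (b - l - p + t) = b + t" using b by auto
    from A have "xs ! (b - l + t) = xs ! (b + t)" by (simp only: e1 e2)
    then show "xs ! (b - l + t) = M ! t" using o t by (simp add: occ_def)
  qed
qed

lemma block_index:
  assumes w: "lets w" and "b + q \<le> length (H w)" and "L dvd b"
  shows "b div L < length w \<and> b = (b div L) * L"
proof
  show "b = (b div L) * L" using assms(3) by simp
  show "b div L < length w"
  proof (rule ccontr)
    assume "\<not> b div L < length w"
    then have "length w * L \<le> (b div L) * L" by (intro mult_le_mono1) simp
    then show False using assms qpos length_H[OF w] \<open>b = (b div L) * L\<close> by linarith
  qed
qed

lemma occ_at_dvd: "lets w \<Longrightarrow> b + q \<le> length (H w) \<Longrightarrow> L dvd b \<Longrightarrow> occ (H w) b"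
  using block_index[of w b] occ_block[of w "b div L"] by metis

lemma sqL:
  assumes w: "lets w" "chain w" and sq: "sq_at (H w) p l"
  shows "L dvd l"
proof -
  have l: "0 < l" "p + 2*l \<le> length (H w)" and eq: "\<forall>t<l. (H w)!(p+t) = (H w)!(p+l+t)"
    using sq by (auto simp: sq_at_def)
  have lH: "length (H w) = length w * L" using length_H[OF w(1)] .
  show ?thesis
  proof (cases "\<exists>b. L dvd b \<and> p \<le> b \<and> b + q \<le> p + l")
    case True
    then obtain b where b: "L dvd b" "p \<le> b" "b + q \<le> p + l" by blast
    have "b + q \<le> length (H w)" using b l by simp
    then have "occ (H w) b" using occ_at_dvd[OF w(1) _ b(1)] by simp
    then have "occ (H w) (b + l)" using occ_shift_right[OF sq _ b(2,3)] by simp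
    then have "L dvd (b + l)" by (rule sync[OF w(1)])
    then show ?thesis using b(1) by (simp add: dvd_add_right_iff)
  next
    case False
    note nob = False
    define k where "k = p div L"
    define b0 where "b0 = k * L"
    have Lpos: "0 < L" using qpos qL by simp
    have pdec: "p = b0 + p mod L" unfolding b0_def k_def by simp
    have pm: "p mod L < L" using Lpos by simp
    have b0p: "b0 \<le> p" "p < b0 + L" using pdec pm by linarith+
    have kw: "k < length w"
    proof (rule ccontr)
      assume "\<not> k < length w"
      then have "length w * L \<le> k * L" by (intro mult_le_mono1) simp
      then show False using l lH b0p b0_def by linarith
    qed
    show ?thesis
    proof (cases "p + 2*l \<le> b0 + L + q - 1")
      case True
      let ?S = "V!(w!k) @ take (q-1) M"
      have wk: "w!k < N" using w kw by (auto simp: lets_def)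
      have lS: "length ?S = L + q - 1" using wk lenM qpos by (simp add: lenV)
      have win: "\<forall>i. i < length ?S \<longrightarrow> b0 + i < length (H w) \<longrightarrow> ?S!i = H w ! (b0 + i)"
        using window1[OF w(1) kw] b0_def by simp
      have le: "p + 2*l \<le> b0 + length ?S" using True lS by simp
      have "sq_at ?S (p - b0) l" by (rule sq_at_factor[OF sq b0p(1) le win])
      then show ?thesis using sqfV[OF wk] sq_at_not_sf by blast
    next
      case False
      define b1 where "b1 = b0 + L"
      have b1d: "L dvd b1" unfolding b1_def b0_def by simp
      have b1p: "p < b1" using b0p b1_def by simp
      have h2: "b1 + q \<le> p + 2*l" using False b1_def by simp
      have k1: "Suc k < length w"
      proof (rule ccontr)
        assume "\<not> Suc k < length w"
        then have "length w * L \<le> Suc k * L" by (intro mult_le_mono1) simp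
        then have "length w * L \<le> b1" using b1_def b0_def by simp
        then show False using l lH h2 qpos by linarith
      qed
      have ob1: "occ (H w) b1" using occ_at_dvd[OF w(1) _ b1d] h2 l by simp
      have c1: "p + l < b1 + q"
      proof (rule ccontr)
        assume "\<not> p + l < b1 + q"
        then have "L dvd b1 \<and> p \<le> b1 \<and> b1 + q \<le> p + l" using b1d b1p by simp
        then show False using nob by blast
      qed
      have c2: "b1 < p + l"
      proof (rule ccontr)
        assume "\<not> b1 < p + l"
        then have h: "p + l \<le> b1" by simp
        have "occ (H w) (b1 - l)" by (rule occ_shift_left[OF sq ob1 h h2])
        then have "L dvd (b1 - l)" by (rule sync[OF w(1)])
        moreover have "p \<le> b1 - l" "b1 - l + q \<le> p + l" using h h2 by arith+
        ultimately show False using nob by blast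
      qed
      have c3: "p + 2*l \<le> b1 + L + q - 1"
      proof (rule ccontr)
        assume "\<not> p + 2*l \<le> b1 + L + q - 1"
        then have h3: "b1 + L + q \<le> p + 2*l" by simp
        have h: "p + l \<le> b1 + L" using c1 qL by simp
        have b2d: "L dvd (b1 + L)" using b1d by simp
        have "occ (H w) (b1 + L)" using occ_at_dvd[OF w(1) _ b2d] h3 l by simp
        then have "occ (H w) (b1 + L - l)" by (rule occ_shift_left[OF sq _ h h3])
        then have "L dvd (b1 + L - l)" by (rule sync[OF w(1)])
        moreover have "p \<le> b1 + L - l" "b1 + L - l + q \<le> p + l" using h h3 by arith+
        ultimately show False using nob by blast
      qed
      let ?x = "w!k" and ?y = "w!Suc k"
      let ?S = "V!?x @ V!?y @ take (q-1) M"
      have wk: "?x < N" "?y \<in> set (good!?x)" using w kw k1 by (auto simp: lets_def chain_def)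
      have wy: "?y < N" using goodV[OF wk] by simp
      have lS: "length ?S = 2*L + q - 1" using wk wy lenM qpos by (simp add: lenV)
      have win: "\<forall>i. i < length ?S \<longrightarrow> b0 + i < length (H w) \<longrightarrow> ?S!i = H w ! (b0 + i)"
        using window2[OF w(1) k1] b0_def by simp
      have le: "p + 2*l \<le> b0 + length ?S" using c3 lS b1_def by simp
      have sqS: "sq_at ?S (p - b0) l" by (rule sq_at_factor[OF sq b0p(1) le win])
      define d where "d = p + l - b1"
      have d: "0 < d" "d < q" using c1 c2 d_def by auto
      have e1: "L + d = p - b0 + l" using c2 b1_def d_def b0p by simp
      have eqS: "\<forall>t<l. ?S ! (p - b0 + t) = ?S ! (p - b0 + l + t)" using sqS by (simp add: sq_at_def)
      have "\<forall>t<l. ?S ! (L+d-l+t) = ?S ! (L+d+t)"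
      proof (intro allI impI)
        fix t assume "t < l"
        then have "?S ! (p - b0 + t) = ?S ! (p - b0 + l + t)" using eqS by blast
        moreover have "L+d-l+t = p - b0 + t" "L+d+t = p - b0 + l + t" using e1 by auto
        ultimately show "?S ! (L+d-l+t) = ?S ! (L+d+t)" by simp
      qed
      moreover have "l \<le> L + d" "L + d + l \<le> 2*L + q - 1" using e1 c3 b1_def b0p by auto
      ultimately show ?thesis using cenok[OF wk d l(1)] by blast
    qed
  qed
qed

lemma sq_pos: "sq_at xs p l \<Longrightarrow> p \<le> i \<Longrightarrow> i < p + l \<Longrightarrow> xs!i = xs!(i+l)"
proof -
  assume sq: "sq_at xs p l" and i: "p \<le> i" "i < p + l"
  have "i - p < l" using i by simp
  then have "xs!(p + (i-p)) = xs!(p + l + (i-p))" using sq unfolding sq_at_def by blast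
  moreover have "p + (i-p) = i" "p + l + (i-p) = i + l" using i by auto
  ultimately show ?thesis by simp
qed

lemma blocks_eq:
  assumes w: "lets w" and ab: "a < length w" "b < length w"
    and e: "\<forall>t<L. H w!(a*L+t) = H w!(b*L+t)"
  shows "w!a = w!b"
proof -
  have wa: "w!a < N" "w!b < N" using w ab by (auto simp: lets_def)
  have "V!(w!a) = V!(w!b)"
  proof (rule nth_equalityI)
    show "length (V!(w!a)) = length (V!(w!b))" using wa by (simp add: lenV)
    fix t assume "t < length (V!(w!a))"
    then have t: "t < L" using wa by (simp add: lenV)
    show "V!(w!a)!t = V!(w!b)!t" using e t nth_H[OF w ab(1) t] nth_H[OF w ab(2) t] by simp
  qed
  then show ?thesis using distV wa by (simp add: nth_eq_iff_index_eq)
qed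

lemma Wn_take: "w \<in> Wn n \<Longrightarrow> m \<le> n \<Longrightarrow> take m w \<in> Wn m"
proof -
  assume w: "w \<in> Wn n" and m: "m \<le> n"
  have "lets (take m w)" using w by (auto simp: Wn_def lets_def dest: in_set_takeD)
  moreover have "chain (take m w)" using w by (auto simp: Wn_def chain_def)
  moreover have "square_free (H (take m w))"
  proof -
    have "H w = H (take m w) @ H (drop m w)" by (metis H_simps(3) append_take_drop_id)
    then show ?thesis using w sf_append by (auto simp: Wn_def)
  qed
  ultimately show ?thesis using w m by (auto simp: Wn_def)
qed

lemma sf_Nil: "square_free []"
  unfolding square_free_def by simp

lemma Wn_Nil: "Wn 0 = {[]}"
proof -
  have "lets []" "chain []" by (simp_all add: lets_def chain_def)
  then show ?thesis unfolding Wn_def using sf_Nil by auto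
qed

lemma ext_valid:
  assumes w: "w \<in> Wn n" and a: "a \<in> Ext w"
  shows "lets (w@[a]) \<and> chain (w@[a]) \<and> a < N"
proof -
  have aN: "a < N"
  proof (cases "w = []")
    case True then show ?thesis using a by (simp add: Ext_def)
  next
    case False
    then have "last w < N" using w by (auto simp: Wn_def lets_def)
    then show ?thesis using a False goodV by (auto simp: Ext_def)
  qed
  have "chain (w@[a])"
    unfolding chain_def
  proof (intro allI impI)
    fix i assume i: "Suc i < length (w@[a])"
    show "(w@[a])!Suc i \<in> set (good!((w@[a])!i))"
    proof (cases "Suc i < length w")
      case True then show ?thesis using w by (auto simp: Wn_def chain_def nth_append)
    next
      case False
      then have "Suc i = length w" using i by simp
      then have wne: "w \<noteq> []" by auto
      then have "last w = w!i" using last_conv_nth[OF wne] \<open>Suc i = length w\<close> by (metis diff_Suc_1)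
      note wne this
      then show ?thesis using a \<open>Suc i = length w\<close> by (auto simp: Ext_def nth_append)
    qed
  qed
  then show ?thesis using w aN by (auto simp: Wn_def lets_def)
qed

lemma last_nth_Suc: "length w = Suc k \<Longrightarrow> last w = w!k \<and> w \<noteq> []"
  by (cases w rule: rev_cases) (auto simp: nth_append)

definition Fj :: "nat \<Rightarrow> nat \<Rightarrow> nat list set" where
  "Fj n j = (\<lambda>(P,z). P @ butlast (drop (length P - j) P) @ [z]) ` (SIGMA P:Wn (n+1-j). Compat (last P))"

lemma mulL_lt: "a * L < b * L \<Longrightarrow> a < (b::nat)"
  by (metis mult_less_cancel2)

lemma classify:
  assumes ww: "w \<in> Wn n" and a: "a \<in> Ext w" and ns: "\<not> square_free (H (w@[a]))"
  shows "\<exists>j. 2 \<le> j \<and> j \<le> n \<and> w@[a] \<in> Fj n j"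
proof -
  define w' where "w' = w@[a]"
  have v: "lets w'" "chain w'" "a < N" using ext_valid[OF ww a] w'_def by auto
  have lw: "length w = n" "lets w" "chain w" "square_free (H w)" using ww by (auto simp: Wn_def)
  have lw': "length w' = Suc n" using lw w'_def by simp
  have Lpos: "0 < L" using qpos qL by simp
  have lH: "length (H w) = n * L" using length_H[OF lw(2)] lw by simp
  have lH': "length (H w') = Suc n * L" using length_H[OF v(1)] lw' by simp
  have Hpre: "\<And>i. i < n * L \<Longrightarrow> H w' ! i = H w ! i" unfolding w'_def using lH by (simp add: nth_append)
  have nH': "\<And>m t. m < Suc n \<Longrightarrow> t < L \<Longrightarrow> H w' ! (m*L+t) = V!(w'!m)!t"
    using nth_H[OF v(1)] lw' by simp
  have w'n: "w'!n = a" "\<And>i. i < n \<Longrightarrow> w'!i = w!i" unfolding w'_def using lw by (auto simp: nth_append)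
  obtain p l where sq: "sq_at (H w') p l" using not_sf_sq_at ns w'_def by blast
  have l: "0 < l" "p + 2*l \<le> Suc n * L" using sq lH' by (auto simp: sq_at_def)
  have "L dvd l" by (rule sqL[OF v(1,2) sq])
  then obtain j where j: "l = j * L" by (metis dvd_def mult.commute)
  have j1: "1 \<le> j" using j l by (cases j) auto
  have big: "n * L < p + 2*l"
  proof (rule ccontr)
    assume "\<not> n * L < p + 2*l"
    then have h: "p + 2*l \<le> n * L" by simp
    have "sq_at (H w) p l" unfolding sq_at_def
    proof (intro conjI allI impI)
      show "0 < l" "p + 2*l \<le> length (H w)" using l h lH by auto
      fix t assume t: "t < l"
      have "H w' ! (p+t) = H w' ! (p+l+t)" using sq t by (simp add: sq_at_def)
      moreover have "p+t < n*L" "p+l+t < n*L" using h t by auto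
      ultimately show "H w ! (p+t) = H w ! (p+l+t)" using Hpre by simp
    qed
    then show False using lw(4) sq_at_not_sf by blast
  qed
  define k r where "k = p div L" and "r = p mod L"
  have p: "p = k*L + r" unfolding k_def r_def by simp
  have rL: "r < L" unfolding r_def using Lpos by simp
  have jm: "\<And>m. m < j \<Longrightarrow> m*L + L \<le> j*L"
  proof -
    fix m assume "m < j" then have "Suc m * L \<le> j * L" by (intro mult_le_mono1) simp
    then show "m*L + L \<le> j*L" by simp
  qed
  have sqp: "\<And>i. p \<le> i \<Longrightarrow> i < p + l \<Longrightarrow> H w' ! i = H w' ! (i + l)" using sq_pos[OF sq] by blast
  show ?thesis
  proof (cases "r = 0")
    case True
    have e1: "(k + 2*j) * L \<le> Suc n * L" using l p j True by (simp add: algebra_simps)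
    have e2: "n * L < (k + 2*j) * L" using big p j True by (simp add: algebra_simps)
    have kj1: "k + 2*j \<le> Suc n" using e1 Lpos mult_le_cancel2 by blast
    have kj: "k + 2*j = Suc n" using kj1 mulL_lt[OF e2] by simp
    have blk: "\<And>m. m < j \<Longrightarrow> w'!(k+m) = w'!(k+j+m)"
    proof -
      fix m assume m: "m < j"
      show "w'!(k+m) = w'!(k+j+m)"
      proof (rule blocks_eq[OF v(1)])
        show "k+m < length w'" "k+j+m < length w'" using m kj lw' by auto
        show "\<forall>t<L. H w'!((k+m)*L+t) = H w'!((k+j+m)*L+t)"
        proof (intro allI impI)
          fix t assume t: "t < L"
          have i1: "(k+m)*L+t = p + (m*L + t)" "(k+j+m)*L+t = p + (m*L+t) + l"
            using p True j by (simp_all add: algebra_simps)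
          have "p \<le> p + (m*L + t)" "p + (m*L + t) < p + l" using jm[OF m] t j by auto
          then have "H w' ! (p + (m*L + t)) = H w' ! (p + (m*L + t) + l)" using sqp by blast
          then show "H w'!((k+m)*L+t) = H w'!((k+j+m)*L+t)" unfolding i1 .
        qed
      qed
    qed
    have jne1: "j \<noteq> 1"
    proof
      assume "j = 1"
      then have kn: "k + 1 = n" using kj by simp
      then have "w'!k = w'!n" using blk[of 0] \<open>j = 1\<close> by simp
      then have "w!k = a" using w'n kn by auto
      moreover have "w \<noteq> []" "last w = w!k" using last_nth_Suc[of w k] kn lw by auto
      moreover have "w!k < N" using lw kn by (auto simp: lets_def)
      ultimately show False using a goodV by (auto simp: Ext_def)
    qed
    have j2: "2 \<le> j" using j1 jne1 by simp
    define P where "P = take (k+j) w'"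
    have lP: "length P = k + j" using P_def lw' kj by simp
    have Pw: "P \<in> Wn (n+1-j)"
    proof -
      have "k + j \<le> n" using kj j1 by simp
      then have "P = take (k+j) w" unfolding P_def w'_def using lw by simp
      moreover have "k + j = n + 1 - j" using kj by simp
      ultimately show ?thesis using Wn_take[OF ww, of "k+j"] kj j1 by simp
    qed
    define D where "D = drop (length P - j) P"
    have lD: "length D = j" using D_def lP by simp
    have D: "drop (k+j) w' = D"
    proof (rule nth_equalityI)
      show "length (drop (k+j) w') = length D" using lD lw' kj by simp
      fix i assume "i < length (drop (k+j) w')"
      then have i: "i < j" using lw' kj by simp
      have "drop (k+j) w' ! i = w'!(k+j+i)" using lw' kj i by simp
      also have "\<dots> = w'!(k+i)" using blk[OF i] by simp
      also have "\<dots> = D!i" unfolding D_def P_def using lP i kj lw' by simp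
      finally show "drop (k+j) w' ! i = D!i" .
    qed
    have w'PD: "w' = P @ D" using D P_def by (metis append_take_drop_id)
    have Dne: "D \<noteq> []" using lD j1 by auto
    have lastD: "last D = a" using w'PD Dne w'_def by (metis last_appendR last_snoc)
    have lastP: "last P = a"
    proof -
      have "last P = P!(k+j-1)" using last_nth_Suc[of P "k+j-1"] lP j1 by simp
      also have "\<dots> = w'!(k+(j-1))" unfolding P_def using j1 kj lw' by simp
      also have "\<dots> = w'!(k+j+(j-1))" using blk[of "j-1"] j1 by simp
      also have "k+j+(j-1) = n" using kj j1 by simp
      finally show ?thesis using w'n by simp
    qed
    have "w' = P @ butlast D @ [a]" using w'PD lastD Dne by (metis append_butlast_last_id)
    moreover have "a \<in> Compat (last P)" using lastP v by (simp add: Compat_def)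
    ultimately have wP: "w' = (\<lambda>(P,z). P @ butlast (drop (length P - j) P) @ [z]) (P, a)"
      and aC: "a \<in> Compat (last P)" unfolding D_def by simp_all
    have "(P, a) \<in> (SIGMA P:Wn (n+1-j). Compat (last P))" using Pw aC by simp
    then have "w' \<in> Fj n j" unfolding Fj_def using wP by (rule image_eqI[rotated])
    moreover have "j \<le> n" using kj j2 by simp
    ultimately show ?thesis using j2 w'_def by blast
  next
    case False
    then have r0: "0 < r" by simp
    have dk: "\<And>m. (k+m)*L = k*L + m*L" by (simp add: add_mult_distrib)
    have l2: "2*l = j*L + j*L" using j by simp
    have e1: "(k + 2*j) * L < Suc n * L"
    proof -
      have "(k + 2*j) * L = k*L + j*L + j*L" by (simp add: add_mult_distrib)
      also have "\<dots> < p + 2*l" using p l2 r0 by linarith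
      also have "\<dots> \<le> Suc n * L" using l(2) .
      finally show ?thesis .
    qed
    have e2: "n * L < Suc (k + 2*j) * L"
    proof -
      have "n * L < p + 2*l" using big .
      also have "\<dots> < k*L + j*L + j*L + L" using p l2 rL by linarith
      also have "\<dots> = Suc (k + 2*j) * L" by (simp add: add_mult_distrib)
      finally show ?thesis .
    qed
    have kj: "k + 2*j = n"
    proof -
      have "k + 2*j < Suc n" using mulL_lt[OF e1] .
      moreover have "n < Suc (k + 2*j)" using mulL_lt[OF e2] .
      ultimately show ?thesis by simp
    qed
    have mid: "\<And>m. 1 \<le> m \<Longrightarrow> m < j \<Longrightarrow> w'!(k+m) = w'!(k+j+m)"
    proof -
      fix m assume m1: "1 \<le> m" and m: "m < j"
      show "w'!(k+m) = w'!(k+j+m)"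
      proof (rule blocks_eq[OF v(1)])
        show "k+m < length w'" "k+j+m < length w'" using m kj lw' by auto
        show "\<forall>t<L. H w'!((k+m)*L+t) = H w'!((k+j+m)*L+t)"
        proof (intro allI impI)
          fix t assume t: "t < L"
          have mL: "L \<le> m*L" using m1 by simp
          have jm': "m*L + L \<le> j*L" using jm[OF m] .
          have d2: "(k+j+m)*L = k*L + j*L + m*L" by (simp add: add_mult_distrib)
          have i1: "(k+m)*L+t = p + (m*L + t - r)" using dk[of m] p mL rL by linarith
          have i2: "(k+j+m)*L+t = p + (m*L+t-r) + l" using d2 p mL rL j by linarith
          have "p \<le> p + (m*L + t - r)" by simp
          moreover have "p + (m*L + t - r) < p + l" using jm' t j mL rL by linarith
          ultimately have "H w' ! (p + (m*L + t - r)) = H w' ! (p + (m*L + t - r) + l)" using sqp by blast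
          then show "H w'!((k+m)*L+t) = H w'!((k+j+m)*L+t)" unfolding i1 i2 .
        qed
      qed
    qed
    let ?X = "w'!k" and ?Y = "w'!(k+j)"
    have kjn: "k < Suc n" "k + j < Suc n" using kj j1 by auto
    have XY: "?X < N" "?Y < N" using v(1) kjn lw' by (auto simp: lets_def)
    have LjL: "L \<le> j*L" using j1 by simp
    have B1: "\<forall>t. r \<le> t \<longrightarrow> t < L \<longrightarrow> V!?X!t = V!?Y!t"
    proof (intro allI impI)
      fix t assume t: "r \<le> t" "t < L"
      have i1: "k*L+t = p + (t - r)" using p t by linarith
      have i2: "(k+j)*L + t = p + (t - r) + l" using dk[of j] p t j by linarith
      have "p \<le> p + (t - r)" by simp
      moreover have "p + (t - r) < p + l" using t j LjL by linarith
      ultimately have "H w' ! (p + (t - r)) = H w' ! (p + (t - r) + l)" using sqp by blast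
      then have "H w'!(k*L+t) = H w'!((k+j)*L+t)" unfolding i1 i2 .
      moreover have "H w'!(k*L+t) = V!?X!t" using nH'[OF kjn(1) t(2)] .
      moreover have "H w'!((k+j)*L+t) = V!?Y!t" using nH'[OF kjn(2) t(2)] .
      ultimately show "V!?X!t = V!?Y!t" by simp
    qed
    have B2: "\<forall>t<r. V!?Y!t = V!a!t"
    proof (intro allI impI)
      fix t assume t: "t < r"
      have d3: "(k+2*j)*L = k*L + j*L + j*L" by (simp add: add_mult_distrib)
      have i1: "(k+j)*L+t = p + (j*L + t - r)" using dk[of j] p t LjL rL by linarith
      have i2: "(k+2*j)*L + t = p + (j*L + t - r) + l" using d3 p t LjL rL j by linarith
      have "p \<le> p + (j*L + t - r)" by simp
      moreover have "p + (j*L + t - r) < p + l" using t j LjL rL by linarith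
      ultimately have "H w' ! (p + (j*L + t - r)) = H w' ! (p + (j*L + t - r) + l)" using sqp by blast
      then have "H w'!((k+j)*L+t) = H w'!((k+2*j)*L+t)" unfolding i1 i2 .
      moreover have tL: "t < L" using t rL by simp
      moreover have "H w'!((k+j)*L+t) = V!?Y!t" using nH'[OF kjn(2) tL] .
      moreover have "H w'!((k+2*j)*L+t) = V!a!t" using nH'[of "k+2*j" t] kj tL w'n by simp
      ultimately show "V!?Y!t = V!a!t" by simp
    qed
    have lcsXY: "L - r \<le> lcs (V!?X) (V!?Y)" using lcs_ge[OF lenV[OF XY(1)] lenV[OF XY(2)] _ B1] rL by simp
    have XneY: "?X \<noteq> ?Y"
    proof
      assume XY': "?X = ?Y"
      have all: "\<And>m. m < j \<Longrightarrow> w'!(k+m) = w'!(k+j+m)"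
      proof -
        fix m assume mj: "m < j"
        show "w'!(k+m) = w'!(k+j+m)"
        proof (cases "m = 0")
          case True then show ?thesis using XY' by simp
        next
          case False then show ?thesis using mid[OF _ mj] by simp
        qed
      qed
      have "sq_at (H w) (k*L) (j*L)" unfolding sq_at_def
      proof (intro conjI allI impI)
        show "0 < j*L" using j1 Lpos by simp
        have "k*L + j*L + j*L = n*L" using kj by (metis add_mult_distrib mult_2 add.assoc)
        then show "k*L + 2*(j*L) \<le> length (H w)" using lH by simp
        fix t assume t: "t < j*L"
        define m t' where "m = t div L" and "t' = t mod L"
        have tt: "t = m*L + t'" "t' < L" unfolding m_def t'_def using Lpos by auto
        have "m*L < j*L" using t tt by linarith
        then have mj: "m < j" by (rule mulL_lt)
        have d2: "(k+j+m)*L = k*L + j*L + m*L" by (simp add: add_mult_distrib)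
        have pos1: "k*L + t = (k+m)*L + t'" using dk[of m] tt by linarith
        have pos2: "k*L + j*L + t = (k+j+m)*L + t'" using d2 tt by linarith
        have lt1: "(k+j+m)*L + t' < n*L"
        proof -
          have "(k+j+m)*L + t' < (k+j+m)*L + L" using tt by simp
          also have "\<dots> = (Suc (k+j+m))*L" by simp
          also have "\<dots> \<le> n*L" using mj kj by (intro mult_le_mono1) simp
          finally show ?thesis .
        qed
        have "(k+m)*L \<le> (k+j+m)*L" by (intro mult_le_mono1) simp
        then have lt0: "(k+m)*L + t' < n*L" using lt1 by linarith
        have km: "k+m < Suc n" "k+j+m < Suc n" using mj kj by auto
        have "H w'!((k+m)*L+t') = H w'!((k+j+m)*L+t')"
          using nH'[OF km(1) tt(2)] nH'[OF km(2) tt(2)] all[OF mj] by simp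
        then show "H w ! (k*L + t) = H w ! (k*L + j*L + t)" using Hpre[OF lt0] Hpre[OF lt1] pos1 pos2 by simp
      qed
      then show False using lw(4) sq_at_not_sf by blast
    qed
    have jne1: "j \<noteq> 1"
    proof
      assume j1': "j = 1"
      then have kn: "k + 2 = n" using kj by simp
      have Xw: "?X = w!k" "?Y = w!(k+1)" using w'n kn j1' by auto
      have Yg: "?Y \<in> set (good!?X)" using lw(1,3) kn Xw by (auto simp: chain_def)
      have "w \<noteq> []" "last w = w!(k+1)" using last_nth_Suc[of w "k+1"] kn lw by auto
      then have ag: "a \<in> set (good!?Y)" using a Xw by (simp add: Ext_def)
      have "r \<le> lcp (V!?Y) (V!a)" by (rule lcp_ge) (use B2 XY v lenV rL in auto)
      then show False using Tok[OF XY(2) ag] LSok[OF XY(1) Yg] lcsXY rL by linarith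
    qed
    have j2: "2 \<le> j" using j1 jne1 by simp
    define P where "P = take (k+j+1) w'"
    have lP: "length P = k + j + 1" using P_def lw' kj by simp
    have Pw: "P \<in> Wn (n+1-j)"
    proof -
      have "P = take (k+j+1) w" unfolding P_def w'_def using kj lw j1 by simp
      moreover have "k + j + 1 = n + 1 - j" using kj by simp
      ultimately show ?thesis using Wn_take[OF ww, of "k+j+1"] kj j1 by simp
    qed
    have lastP: "last P = ?Y" using last_nth_Suc[of P "k+j"] lP unfolding P_def using lw' kj j1 by simp
    define D where "D = drop (length P - j) P"
    have lD: "length D = j" using D_def lP by simp
    have Dn: "\<And>i. i < j \<Longrightarrow> D!i = w'!(k+1+i)" unfolding D_def P_def using lP lw' kj by simp
    have rest: "drop (k+j+1) w' = butlast D @ [a]"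
    proof (rule nth_equalityI)
      show "length (drop (k+j+1) w') = length (butlast D @ [a])" using lD lw' kj j1 by simp
      fix i assume "i < length (drop (k+j+1) w')"
      then have i: "i < j" using lw' kj by simp
      show "drop (k+j+1) w' ! i = (butlast D @ [a]) ! i"
      proof (cases "i < j - 1")
        case True
        have "drop (k+j+1) w' ! i = w'!(k+j+(i+1))" using lw' kj i by simp
        also have "\<dots> = w'!(k+(i+1))" using mid[of "i+1"] True by simp
        also have "\<dots> = D!i" using Dn i by simp
        also have "\<dots> = (butlast D @ [a]) ! i" using True lD by (simp add: nth_append nth_butlast)
        finally show ?thesis .
      next
        case False
        then have ij: "i = j - 1" using i by simp
        have kjj: "k + j + j = n" using kj by simp
        have "drop (k+j+1) w' ! i = w'!(k+j+1+i)" using lw' kj i by simp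
        also have "k+j+1+i = n" using kj ij j1 by simp
        finally have "drop (k+j+1) w' ! i = w'!n" .
        then show ?thesis using w'n ij lD by (simp add: nth_append)
      qed
    qed
    have w'P: "w' = P @ butlast D @ [a]" using rest P_def by (metis append_take_drop_id)
    have aC: "a \<in> Compat (last P)"
    proof -
      have "lcs (V!?X) (V!?Y) \<le> s!?Y" using sok[OF XY XneY] .
      then have sr: "L - s!?Y \<le> r" using lcsXY by linarith
      have "take (L - s!?Y) (V!a) = take (L - s!?Y) (V!?Y)"
        by (rule nth_equalityI) (use sr B2 lenV[OF XY(2)] lenV[OF v(3)] rL in auto)
      then show ?thesis using lastP v by (simp add: Compat_def)
    qed
    have wP: "w' = (\<lambda>(P,z). P @ butlast (drop (length P - j) P) @ [z]) (P, a)"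
      using w'P unfolding D_def by simp
    have "(P, a) \<in> (SIGMA P:Wn (n+1-j). Compat (last P))" using Pw aC by simp
    then have "w' \<in> Fj n j" unfolding Fj_def using wP by (rule image_eqI[rotated])
    moreover have "j \<le> n" using kj j2 by simp
    ultimately show ?thesis using j2 w'_def by blast
  qed
qed

lemma finite_Wn: "finite (Wn n)"
proof (rule finite_subset)
  show "Wn n \<subseteq> {w. set w \<subseteq> {..<N} \<and> length w = n}" by (auto simp: Wn_def lets_def)
  show "finite {w. set w \<subseteq> {..<N} \<and> length w = n}" by (rule finite_lists_length_eq) simp
qed

lemma card_Ext: "w \<in> Wn n \<Longrightarrow> finite (Ext w) \<and> dl \<le> card (Ext w)"
proof -
  assume w: "w \<in> Wn n"
  show ?thesis
  proof (cases "w = []")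
    case True then show ?thesis using dlN by (simp add: Ext_def)
  next
    case False
    then have "last w < N" using w by (auto simp: Wn_def lets_def)
    then have "distinct (good!(last w)) \<and> dl \<le> length (good!(last w))" by (rule gooddist)
    then show ?thesis using False by (simp add: Ext_def distinct_card)
  qed
qed

lemma finite_Fj: "finite (Fj n j)"
proof -
  have "finite (SIGMA P:Wn (n+1-j). Compat (last P))"
    by (rule finite_SigmaI) (auto simp: finite_Wn Compat_def)
  then show ?thesis unfolding Fj_def by simp
qed

lemma card_Fj: "j \<le> n \<Longrightarrow> card (Fj n j) \<le> K * card (Wn (n+1-j))"
proof -
  assume jn: "j \<le> n"
  have fin: "\<forall>P\<in>Wn (n+1-j). finite (Compat (last P))" by (auto simp: Compat_def)
  have "card (Fj n j) \<le> card (SIGMA P:Wn (n+1-j). Compat (last P))"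
    unfolding Fj_def by (rule card_image_le) (rule finite_SigmaI, auto simp: finite_Wn Compat_def)
  also have "\<dots> = (\<Sum>P\<in>Wn (n+1-j). card (Compat (last P)))"
    by (rule card_SigmaI) (use finite_Wn fin in auto)
  also have "\<dots> \<le> (\<Sum>P\<in>Wn (n+1-j). K)"
  proof (rule sum_mono)
    fix P assume P: "P \<in> Wn (n+1-j)"
    then have "P \<noteq> []" using jn by (auto simp: Wn_def)
    then have "last P < N" using P by (auto simp: Wn_def lets_def)
    then show "card (Compat (last P)) \<le> K" using Kok unfolding Compat_def by blast
  qed
  also have "\<dots> = K * card (Wn (n+1-j))" by simp
  finally show ?thesis .
qed

lemma count:
  "dl * card (Wn n) \<le> card (Wn (Suc n)) + K * (\<Sum>j\<in>{2..n}. card (Wn (n+1-j)))"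
proof -
  define f where "f = (\<lambda>(w::nat list, a::nat). w @ [a])"
  define S where "S = (SIGMA w:Wn n. Ext w)"
  have finS: "finite S" unfolding S_def by (rule finite_SigmaI) (use finite_Wn card_Ext in auto)
  have inj: "inj_on f S" unfolding f_def inj_on_def by auto
  have "dl * card (Wn n) = (\<Sum>w\<in>Wn n. dl)" by simp
  also have "\<dots> \<le> (\<Sum>w\<in>Wn n. card (Ext w))" by (rule sum_mono) (use card_Ext in auto)
  also have "\<dots> = card S" unfolding S_def by (rule card_SigmaI[symmetric]) (use finite_Wn card_Ext in auto)
  also have "\<dots> = card (f ` S)" using card_image[OF inj] by simp
  also have "\<dots> \<le> card (Wn (Suc n) \<union> (\<Union>j\<in>{2..n}. Fj n j))"
  proof (rule card_mono)
    show "finite (Wn (Suc n) \<union> (\<Union>j\<in>{2..n}. Fj n j))" using finite_Wn finite_Fj by auto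
    show "f ` S \<subseteq> Wn (Suc n) \<union> (\<Union>j\<in>{2..n}. Fj n j)"
    proof
      fix x assume "x \<in> f ` S"
      then obtain w a where wa: "w \<in> Wn n" "a \<in> Ext w" and x: "x = w @ [a]" unfolding S_def f_def by auto
      show "x \<in> Wn (Suc n) \<union> (\<Union>j\<in>{2..n}. Fj n j)"
      proof (cases "square_free (H (w@[a]))")
        case True
        then have "x \<in> Wn (Suc n)" using ext_valid[OF wa] wa x by (auto simp: Wn_def)
        then show ?thesis by simp
      next
        case False
        then obtain j where "2 \<le> j" "j \<le> n" "w@[a] \<in> Fj n j" using classify[OF wa] by blast
        then show ?thesis using x by auto
      qed
    qed
  qed
  also have "\<dots> \<le> card (Wn (Suc n)) + card (\<Union>j\<in>{2..n}. Fj n j)" by (rule card_Un_le)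
  also have "card (\<Union>j\<in>{2..n}. Fj n j) \<le> (\<Sum>j\<in>{2..n}. card (Fj n j))" by (rule card_UN_le) simp
  also have "\<dots> \<le> (\<Sum>j\<in>{2..n}. K * card (Wn (n+1-j)))" by (rule sum_mono) (use card_Fj in auto)
  also have "\<dots> = K * (\<Sum>j\<in>{2..n}. card (Wn (n+1-j)))" by (simp add: sum_distrib_left)
  finally show ?thesis by simp
qed

lemma H_inj: "inj_on H (Wn n)"
proof (rule inj_onI)
  fix u v assume u: "u \<in> Wn n" and v: "v \<in> Wn n" and e: "H u = H v"
  have lu: "lets u" "lets v" "length u = n" "length v = n" using u v by (auto simp: Wn_def)
  show "u = v"
  proof (rule nth_equalityI)
    show "length u = length v" using lu by simp
    fix m assume m: "m < length u"
    have um: "u!m < N" "v!m < N" using lu m by (auto simp: lets_def)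
    have "V!(u!m) = V!(v!m)"
    proof (rule nth_equalityI)
      show "length (V!(u!m)) = length (V!(v!m))" using um by (simp add: lenV)
      fix t assume "t < length (V!(u!m))"
      then have t: "t < L" using um by (simp add: lenV)
      show "V!(u!m)!t = V!(v!m)!t" using nth_H[OF lu(1) m t] nth_H[OF lu(2) _ t, of m] m lu e by simp
    qed
    then show "u!m = v!m" using distV um by (simp add: nth_eq_iff_index_eq)
  qed
qed

lemma Wn_le_count: "card (Wn n) \<le> sqfree_count (n * L)"
proof -
  have "card (Wn n) = card (H ` Wn n)" using card_image[OF H_inj] by simp
  also have "\<dots> \<le> sqfree_count (n * L)" unfolding sqfree_count_def
  proof (rule card_mono)
    show "finite {w :: nat list. length w = n * L \<and> set w \<subseteq> {0,1,2} \<and> square_free w}"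
      by (rule finite_subset[OF _ finite_lists_length_eq[of "{0::nat,1,2}" "n*L"]]) auto
    show "H ` Wn n \<subseteq> {w. length w = n * L \<and> set w \<subseteq> {0,1,2} \<and> square_free w}"
    proof
      fix x assume "x \<in> H ` Wn n"
      then obtain w where w: "w \<in> Wn n" and x: "x = H w" by auto
      have lw: "lets w" "length w = n" "square_free (H w)" using w by (auto simp: Wn_def)
      have "set (H w) \<subseteq> {0,1,2}" using lw(1) letters unfolding H_def lets_def by auto
      then show "x \<in> {w. length w = n * L \<and> set w \<subseteq> {0,1,2} \<and> square_free w}"
        using x lw length_H by auto
    qed
  qed
  finally show ?thesis .
qed

lemma geo:
  fixes \<beta> :: real assumes b: "1 < \<beta>"
  shows "(\<Sum>j\<in>{2..Suc m}. (1/\<beta>)^(j-1)) = (1 - (1/\<beta>)^m)/(\<beta> - 1)"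
proof (induction m)
  case 0 then show ?case by simp
next
  case (Suc m)
  have "{2..Suc (Suc m)} = insert (Suc (Suc m)) {2..Suc m}" by auto
  then have "(\<Sum>j\<in>{2..Suc (Suc m)}. (1/\<beta>)^(j-1)) = (1/\<beta>)^(Suc m) + (\<Sum>j\<in>{2..Suc m}. (1/\<beta>)^(j-1))"
    by simp
  also have "\<dots> = (1/\<beta>)^(Suc m) + (1 - (1/\<beta>)^m)/(\<beta> - 1)" using Suc by simp
  also have "\<dots> = (1 - (1/\<beta>)^(Suc m))/(\<beta> - 1)"
  proof -
    have "(1/\<beta>)^(Suc m) * \<beta> = (1/\<beta>)^m" using b by simp
    then show ?thesis using b by (simp add: field_simps)
  qed
  finally show ?case .
qed

lemma geo_le:
  fixes \<beta> :: real assumes b: "1 < \<beta>"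
  shows "(\<Sum>j\<in>{2..n}. (1/\<beta>)^(j-1)) \<le> 1/(\<beta> - 1)"
proof (cases n)
  case 0 then show ?thesis using b by simp
next
  case (Suc m)
  have "0 \<le> (1/\<beta>)^m" using b by simp
  then have "(1 - (1/\<beta>)^m)/(\<beta> - 1) \<le> 1/(\<beta> - 1)" using b by (simp add: divide_right_mono)
  then show ?thesis using geo[OF b, of m] Suc by simp
qed

lemma growth_step:
  fixes \<beta> :: real assumes b1: "1 < \<beta>" and bd: "\<beta> \<le> real dl - real K / (\<beta> - 1)"
  shows "\<beta> * real (card (Wn n)) \<le> real (card (Wn (Suc n)))"
proof (induction n rule: less_induct)
  case (less n)
  define c where "c i = real (card (Wn i))" for i
  have c0: "\<And>i. 0 \<le> c i" unfolding c_def by simp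
  have bkw: "\<And>i. i \<le> n \<Longrightarrow> \<beta>^i * c (n - i) \<le> c n"
  proof -
    fix i show "i \<le> n \<Longrightarrow> \<beta>^i * c (n - i) \<le> c n"
    proof (induction i)
      case 0 then show ?case by simp
    next
      case (Suc i)
      have m: "n - Suc i < n" using Suc.prems by simp
      have st: "\<beta> * c (n - Suc i) \<le> c (Suc (n - Suc i))" using less.IH[OF m] unfolding c_def .
      have e: "Suc (n - Suc i) = n - i" using Suc.prems by simp
      have "\<beta>^(Suc i) * c (n - Suc i) = \<beta>^i * (\<beta> * c (n - Suc i))" by simp
      also have "\<dots> \<le> \<beta>^i * c (n - i)" using st e b1 by (intro mult_left_mono) auto
      also have "\<dots> \<le> c n" using Suc by simp
      finally show ?case .
    qed
  qed
  have bnd: "\<And>j. j \<in> {2..n} \<Longrightarrow> c (n+1-j) \<le> c n * (1/\<beta>)^(j-1)"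
  proof -
    fix j assume j: "j \<in> {2..n}"
    have jj: "j - 1 \<le> n" using j by (simp add: le_trans[OF diff_le_self])
    have "\<beta>^(j-1) * c (n - (j-1)) \<le> c n" by (rule bkw[OF jj])
    moreover have "n - (j-1) = n+1-j" using j by auto
    moreover have "0 < \<beta>^(j-1)" using b1 by simp
    ultimately show "c (n+1-j) \<le> c n * (1/\<beta>)^(j-1)"
      by (simp add: field_simps power_one_over)
  qed
  have "(\<Sum>j\<in>{2..n}. c (n+1-j)) \<le> (\<Sum>j\<in>{2..n}. c n * (1/\<beta>)^(j-1))" by (rule sum_mono) (rule bnd)
  also have "\<dots> = c n * (\<Sum>j\<in>{2..n}. (1/\<beta>)^(j-1))" by (simp add: sum_distrib_left)
  also have "\<dots> \<le> c n * (1/(\<beta> - 1))" using geo_le[OF b1, of n] c0 by (intro mult_left_mono) auto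
  finally have S: "(\<Sum>j\<in>{2..n}. c (n+1-j)) \<le> c n / (\<beta> - 1)" by simp
  have "real (dl * card (Wn n)) \<le> real (card (Wn (Suc n)) + K * (\<Sum>j\<in>{2..n}. card (Wn (n+1-j))))"
    using count by (simp only: of_nat_le_iff)
  then have C: "real dl * c n \<le> c (Suc n) + real K * (\<Sum>j\<in>{2..n}. c (n+1-j))" unfolding c_def by simp
  have "real K * (\<Sum>j\<in>{2..n}. c (n+1-j)) \<le> real K * (c n / (\<beta> - 1))" using S by (intro mult_left_mono) auto
  then have "real dl * c n \<le> c (Suc n) + real K * c n / (\<beta> - 1)" using C by simp
  moreover have "\<beta> * c n \<le> (real dl - real K / (\<beta> - 1)) * c n" using bd c0 by (intro mult_right_mono) auto
  ultimately have "\<beta> * c n \<le> c (Suc n)" by (simp add: algebra_simps)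
  then show ?case unfolding c_def .
qed

lemma growth:
  fixes \<beta> :: real assumes b1: "1 < \<beta>" and bd: "\<beta> \<le> real dl - real K / (\<beta> - 1)"
  shows "\<beta>^n \<le> real (sqfree_count (n * L))"
proof -
  have "\<beta>^n \<le> real (card (Wn n))"
  proof (induction n)
    case 0 then show ?case by (simp add: Wn_Nil)
  next
    case (Suc n)
    have "\<beta>^(Suc n) = \<beta> * \<beta>^n" by simp
    also have "\<dots> \<le> \<beta> * real (card (Wn n))" using Suc b1 by simp
    also have "\<dots> \<le> real (card (Wn (Suc n)))" by (rule growth_step[OF b1 bd])
    finally show ?case .
  qed
  also have "\<dots> \<le> real (sqfree_count (n * L))" using Wn_le_count by simp
  finally show ?thesis .
qed

end


fun peq :: "nat \<Rightarrow> nat list \<Rightarrow> nat list \<Rightarrow> bool" where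
  "peq 0 xs ys = True"
| "peq (Suc k) (x#xs) (y#ys) = (if x = y then peq k xs ys else False)"
| "peq (Suc k) [] ys = False"
| "peq (Suc k) xs [] = False"

lemma peq_num[simp]:
  "peq (numeral k) (x#xs) (y#ys) = (if x = y then peq (pred_numeral k) xs ys else False)"
  "peq (numeral k) [] ys = False" "peq (numeral k) xs [] = False"
  by (simp_all add: numeral_eq_Suc, cases xs, simp_all)

lemma peq_iff: "peq n xs ys \<longleftrightarrow> n \<le> length xs \<and> n \<le> length ys \<and> take n xs = take n ys"
proof (induction n xs ys rule: peq.induct)
  case (4 k x xs) then show ?case by simp
qed auto

fun cen :: "nat list \<Rightarrow> nat list \<Rightarrow> nat list \<Rightarrow> nat \<Rightarrow> bool" where
  "cen [] A S k = True"
| "cen (r#R) A S k = ((\<not> peq (Suc k) (r#A) S) \<and> cen R (r#A) S (Suc k))"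

lemma cen_Nil: "cen R A [] k"
  by (induction R arbitrary: A k) auto

lemma cen_sound: "cen R A S k \<Longrightarrow> i < length R \<Longrightarrow> \<not> peq (Suc (k+i)) (rev (take (Suc i) R) @ A) S"
proof (induction R arbitrary: A k i)
  case Nil then show ?case by simp
next
  case (Cons r R)
  show ?case
  proof (cases i)
    case 0 then show ?thesis using Cons.prems by simp
  next
    case (Suc i')
    have "\<not> peq (Suc (Suc k + i')) (rev (take (Suc i') R) @ (r#A)) S"
      using Cons.IH[of "r#A" "Suc k" i'] Cons.prems Suc by simp
    then show ?thesis using Suc by simp
  qed
qed

definition nocen :: "nat list \<Rightarrow> nat \<Rightarrow> bool" where
  "nocen w c = cen (rev (take c w)) (drop c w) (drop c w) 0"

lemma nocen_sound:
  assumes nc: "nocen w c" and l: "0 < l" "l \<le> c" "c + l \<le> length w"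
  shows "\<not> (\<forall>t<l. w!(c-l+t) = w!(c+t))"
proof
  assume eq: "\<forall>t<l. w!(c-l+t) = w!(c+t)"
  have cw: "c \<le> length w" using l by simp
  have i: "l - 1 < length (rev (take c w))" using l cw by simp
  have np: "\<not> peq l (rev (take l (rev (take c w))) @ drop c w) (drop c w)"
    using cen_sound[OF nc[unfolded nocen_def] i] l by simp
  have e1: "rev (take l (rev (take c w))) @ drop c w = drop (c - l) w"
  proof -
    have "rev (take l (rev (take c w))) = drop (c - l) (take c w)"
      using cw by (simp add: take_rev)
    also have "drop (c - l) (take c w) @ drop c w = drop (c - l) w"
    proof -
      have "drop (c - l) w = take l (drop (c-l) w) @ drop l (drop (c - l) w)" by (rule append_take_drop_id[symmetric])
      moreover have lc: "l + (c - l) = c" using l by simp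
      moreover have "take l (drop (c-l) w) = drop (c-l) (take c w)" by (simp only: take_drop lc)
      moreover have "drop l (drop (c-l) w) = drop c w" by (simp only: drop_drop lc)
      ultimately show ?thesis by simp
    qed
    finally show ?thesis by simp
  qed
  have "take l (drop (c - l) w) = take l (drop c w)"
    by (rule nth_equalityI) (use eq l in auto)
  moreover have "l \<le> length (drop (c - l) w)" "l \<le> length (drop c w)" using l by auto
  ultimately have "peq l (drop (c - l) w) (drop c w)" by (simp only: peq_iff)
  then show False using np e1 by simp
qed

fun sqcn :: "nat \<Rightarrow> nat list \<Rightarrow> nat list \<Rightarrow> bool" where
  "sqcn 0 R S = True"
| "sqcn (Suc n) R [] = True"
| "sqcn (Suc n) R (s#S) = (cen R (s#S) (s#S) 0 \<and> sqcn n (s#R) S)"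

lemma sqcn_num[simp]: "sqcn (numeral k) R (s#S) = (cen R (s#S) (s#S) 0 \<and> sqcn (pred_numeral k) (s#R) S)"
  by (simp add: numeral_eq_Suc)

lemma sqcn_sound: "sqcn n R S \<Longrightarrow> c < n \<Longrightarrow> c \<le> length S \<Longrightarrow> cen (rev (take c S) @ R) (drop c S) (drop c S) 0"
proof (induction n R S arbitrary: c rule: sqcn.induct)
  case (1 R S) then show ?case by simp
next
  case (2 n R) then show ?case by (simp add: cen_Nil)
next
  case (3 n R s S)
  show ?case
  proof (cases c)
    case 0 then show ?thesis using "3.prems" by simp
  next
    case (Suc c')
    have "cen (rev (take c' S) @ (s#R)) (drop c' S) (drop c' S) 0" using "3.IH"[of c'] "3.prems" Suc by simp
    then show ?thesis using Suc by simp
  qed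
qed

definition sqc :: "nat list \<Rightarrow> bool" where
  "sqc w = sqcn (Suc (length w)) [] w"

lemma sqc_sound: "sqc w \<Longrightarrow> square_free w"
proof (rule ccontr)
  assume s: "sqc w" and ns: "\<not> square_free w"
  obtain p l where sq: "sq_at w p l" using not_sf_sq_at[OF ns] by blast
  have l: "0 < l" "p + 2*l \<le> length w" and eq: "\<forall>t<l. w!(p+t) = w!(p+l+t)" using sq by (auto simp: sq_at_def)
  have "nocen w (p+l)" unfolding nocen_def using sqcn_sound[OF s[unfolded sqc_def], of "p+l"] l by simp
  moreover have "\<forall>t<l. w!(p+l-l+t) = w!(p+l+t)" using eq by simp
  ultimately show False using nocen_sound[of w "p+l" l] l by simp
qed

definition nocen4 :: "nat list \<Rightarrow> bool" where
  "nocen4 w = sqcn 4 (rev (take 30 w)) (drop 30 w)"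

lemma nocen4_sound: "nocen4 w \<Longrightarrow> length w = 62 \<Longrightarrow> c < 4 \<Longrightarrow> nocen w (30 + c)"
proof -
  assume n: "nocen4 w" and lw: "length w = 62" and c: "c < 4"
  have "cen (rev (take c (drop 30 w)) @ rev (take 30 w)) (drop c (drop 30 w)) (drop c (drop 30 w)) 0"
    using sqcn_sound[OF n[unfolded nocen4_def] c] lw c by simp
  moreover have "rev (take c (drop 30 w)) @ rev (take 30 w) = rev (take (30 + c) w)"
    by (simp add: take_add)
  ultimately show ?thesis unfolding nocen_def by (simp add: add.commute)
qed

fun d2 :: "nat list \<Rightarrow> nat list \<Rightarrow> bool" where
  "d2 M [] = True"
| "d2 M (x#xs) = (\<not> peq 5 M (x#xs) \<and> d2 M xs)"

lemma d2_sound: "d2 M xs \<Longrightarrow> p < length xs \<Longrightarrow> \<not> peq 5 M (drop p xs)"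
proof (induction xs arbitrary: p)
  case Nil then show ?case by simp
next
  case (Cons x xs) then show ?case by (cases p) auto
qed

fun chkall :: "(nat \<Rightarrow> bool) \<Rightarrow> nat \<Rightarrow> bool" where
  "chkall P 0 = True"
| "chkall P (Suc n) = (P n \<and> chkall P n)"

lemma chkall_num[simp]: "chkall P (numeral k) = (P (pred_numeral k) \<and> chkall P (pred_numeral k))"
  by (simp add: numeral_eq_Suc)

lemma chkall_sound: "chkall P n \<Longrightarrow> i < n \<Longrightarrow> P i"
  by (induction n) (auto simp: less_Suc_eq)

fun rowsc :: "(nat \<Rightarrow> nat list \<Rightarrow> nat \<Rightarrow> bool) \<Rightarrow> nat \<Rightarrow> nat list list \<Rightarrow> nat list list \<Rightarrow> bool" where
  "rowsc Q x (v#vs) (ys#yss) = (list_all (Q x v) ys \<and> rowsc Q (Suc x) vs yss)"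
| "rowsc Q x _ _ = True"

lemma rowsc_append: "length a = length c \<Longrightarrow> rowsc Q x (a@b) (c@d) = (rowsc Q x a c \<and> rowsc Q (x + length a) b d)"
proof (induction a arbitrary: c x)
  case Nil then show ?case by simp
next
  case (Cons v a)
  then obtain ys c' where "c = ys # c'" "length a = length c'" by (cases c) auto
  then show ?case using Cons.IH[of c' "Suc x"] by simp
qed

lemma rowsc_sound: "rowsc Q x vs yss \<Longrightarrow> length vs = length yss \<Longrightarrow> i < length vs \<Longrightarrow> y \<in> set (yss!i) \<Longrightarrow> Q (x+i) (vs!i) y"
proof (induction vs arbitrary: yss x i)
  case Nil then show ?case by simp
next
  case (Cons v vs)
  then obtain ys yss' where yss: "yss = ys # yss'" by (cases yss) auto
  show ?case
  proof (cases i)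
    case 0 then show ?thesis using Cons.prems yss by (simp add: list_all_iff)
  next
    case (Suc i') then show ?thesis using Cons.IH[of "Suc x" yss' i'] Cons.prems yss by simp
  qed
qed



definition w0 :: "nat list" where "w0 = [0,1,2,0,2,1,0,2,0,1,0,2,1,2,0,1,0,2,0,1,2,1,0,2,0,1,0,2,1]"

definition w1 :: "nat list" where "w1 = [0,1,2,0,2,1,0,2,0,1,0,2,1,2,0,1,2,1,0,2,0,1,0,2,1,2,0,2,1]"

definition w2 :: "nat list" where "w2 = [0,1,2,0,2,1,2,0,1,0,2,0,1,2,1,0,1,2,0,1,0,2,1,0,1,2,1,0,2]"

definition w3 :: "nat list" where "w3 = [0,1,2,0,2,1,2,0,1,0,2,0,1,2,1,0,1,2,0,1,0,2,1,2,0,2,1,0,2]"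

definition w4 :: "nat list" where "w4 = [0,1,2,0,2,1,2,0,1,0,2,0,1,2,1,0,2,0,1,0,2,1,0,1,2,0,1,0,2]"

definition w5 :: "nat list" where "w5 = [0,1,2,0,2,1,2,0,1,0,2,0,1,2,1,0,2,0,1,0,2,1,2,0,1,2,1,0,2]"

definition w6 :: "nat list" where "w6 = [0,1,2,0,2,1,2,0,1,0,2,0,1,2,1,0,2,1,2,0,2,1,0,1,2,0,1,0,2]"

definition w7 :: "nat list" where "w7 = [0,1,2,0,2,1,2,0,1,0,2,0,1,2,1,0,2,1,2,0,2,1,0,2,0,1,0,2,1]"

definition w8 :: "nat list" where "w8 = [0,1,2,0,2,1,2,0,1,0,2,1,0,1,2,1,0,2,0,1,2,1,0,1,2,0,1,0,2]"

definition w9 :: "nat list" where "w9 = [0,1,2,0,2,1,2,0,1,0,2,1,0,1,2,1,0,2,1,2,0,2,1,0,1,2,1,0,2]"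

definition w10 :: "nat list" where "w10 = [0,1,2,0,2,1,2,0,1,0,2,1,0,1,2,1,0,2,1,2,0,2,1,0,2,0,1,2,1]"

definition w11 :: "nat list" where "w11 = [0,1,2,0,2,1,2,0,1,0,2,1,2,0,2,1,0,1,2,0,1,0,2,1,2,0,1,2,1]"

definition w12 :: "nat list" where "w12 = [0,1,2,0,2,1,2,0,1,0,2,1,2,0,2,1,0,1,2,1,0,2,1,2,0,1,0,2,1]"

definition w13 :: "nat list" where "w13 = [0,1,2,0,2,1,2,0,1,0,2,1,2,0,2,1,0,1,2,1,0,2,1,2,0,2,1,0,2]"

definition w14 :: "nat list" where "w14 = [0,1,2,0,2,1,2,0,1,0,2,1,2,0,2,1,0,2,0,1,0,2,1,0,1,2,1,0,2]"

definition w15 :: "nat list" where "w15 = [0,1,2,0,2,1,2,0,1,0,2,1,2,0,2,1,0,2,0,1,2,1,0,1,2,0,1,0,2]"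

definition w16 :: "nat list" where "w16 = [0,1,2,0,2,1,2,0,1,0,2,1,2,0,2,1,0,2,0,1,2,1,0,2,1,2,0,2,1]"

definition w17 :: "nat list" where "w17 = [0,1,2,0,2,1,2,0,1,2,1,0,1,2,0,1,0,2,1,0,1,2,1,0,2,0,1,2,1]"

definition w18 :: "nat list" where "w18 = [0,1,2,0,2,1,2,0,1,2,1,0,1,2,0,1,0,2,1,2,0,2,1,0,1,2,1,0,2]"

definition w19 :: "nat list" where "w19 = [0,1,2,0,2,1,2,0,1,2,1,0,1,2,0,1,0,2,1,2,0,2,1,0,2,0,1,2,1]"

definition w20 :: "nat list" where "w20 = [0,1,2,0,2,1,2,0,1,2,1,0,2,0,1,0,2,1,0,1,2,0,1,0,2,0,1,2,1]"

definition w21 :: "nat list" where "w21 = [0,1,2,0,2,1,2,0,1,2,1,0,2,0,1,0,2,1,2,0,2,1,0,1,2,0,1,0,2]"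

definition w22 :: "nat list" where "w22 = [0,1,2,0,2,1,2,0,1,2,1,0,2,0,1,0,2,1,2,0,2,1,0,2,0,1,0,2,1]"

definition w23 :: "nat list" where "w23 = [0,1,2,0,2,1,2,0,1,2,1,0,2,1,2,0,2,1,0,1,2,1,0,2,0,1,0,2,1]"

definition w24 :: "nat list" where "w24 = [0,1,2,0,2,1,2,0,1,2,1,0,2,1,2,0,2,1,0,2,0,1,0,2,1,2,0,2,1]"

lemmas wdefs = w0_def w1_def w2_def w3_def w4_def w5_def w6_def w7_def w8_def w9_def w10_def w11_def w12_def w13_def w14_def w15_def w16_def w17_def w18_def w19_def w20_def w21_def w22_def w23_def w24_def

definition A0 :: "nat list list" where "A0 = [w0, w1, w2, w3, w4]"

definition G0 :: "nat list list" where "G0 = [[2,3,5,6,7,8,9,10,11,13,14,15,16,17,18,19,20,21,22,23,24], [2,3,4,5,6,7,8,9,10,11,12,13,14,15,16,17,18,19,20,22,23], [0,1,4,5,6,7,8,9,10,11,12,15,16,17,18,19,20,21,22,23,24], [2,4,5,6,7,8,9,10,11,12,14,15,16,17,18,19,20,21,22,23,24], [0,1,2,3,8,9,10,11,12,13,14,15,16,17,18,19,20,21,22,23,24]]"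

definition A1 :: "nat list list" where "A1 = [w5, w6, w7, w8, w9]"

definition G1 :: "nat list list" where "G1 = [[0,1,2,3,6,8,9,10,11,12,14,15,16,17,18,19,20,21,22,23,24], [0,1,2,3,8,9,10,11,12,13,14,15,16,17,18,19,20,21,22,23,24], [0,1,2,3,4,5,8,9,10,11,13,14,15,16,17,18,19,20,21,23,24], [0,1,2,3,4,5,6,7,11,12,13,14,16,17,18,19,20,21,22,23,24], [0,1,2,3,4,5,6,7,11,12,14,15,16,17,18,19,20,21,22,23,24]]"

definition A2 :: "nat list list" where "A2 = [w10, w11, w12, w13, w14]"

definition G2 :: "nat list list" where "G2 = [[0,1,2,3,4,5,6,7,11,12,13,14,15,17,18,19,20,21,22,23,24], [0,1,2,3,4,5,6,7,8,9,10,12,13,14,15,16,20,21,22,23,24], [0,1,2,3,4,5,6,7,11,13,14,15,16,17,18,19,20,21,22,23,24], [2,4,5,6,7,8,9,10,11,12,14,15,16,17,18,19,20,21,22,23,24], [0,1,2,3,4,5,6,7,8,9,10,11,12,17,18,19,20,21,22,23,24]]"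

definition A3 :: "nat list list" where "A3 = [w15, w16, w17, w18, w19]"

definition G3 :: "nat list list" where "G3 = [[0,1,2,3,4,5,6,7,8,9,10,11,12,17,18,19,20,21,22,23,24], [2,3,4,5,6,7,8,9,10,11,12,13,14,17,18,19,20,21,22,23,24], [0,1,2,3,4,5,6,7,8,9,10,11,12,13,14,15,16,20,21,22,23], [0,1,2,3,4,5,6,7,8,9,10,11,12,14,15,16,20,21,22,23,24], [0,1,2,3,4,5,6,7,8,9,10,11,12,13,14,15,16,20,21,22,23]]"

definition A4 :: "nat list list" where "A4 = [w20, w21, w22, w23, w24]"

definition G4 :: "nat list list" where "G4 = [[0,1,2,3,4,5,6,7,8,9,10,11,12,13,14,15,16,17,18,19,23], [0,1,2,3,4,5,7,8,9,10,11,12,13,14,15,16,17,18,19,23,24], [0,1,2,3,4,5,6,8,9,10,11,13,14,15,16,17,18,19,20,23,24], [0,1,2,3,4,5,6,7,8,9,10,11,13,14,15,16,17,18,19,20,21], [2,3,4,5,6,7,8,9,10,11,12,13,14,15,16,17,18,19,20,21,22]]"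

definition Vd :: "nat list list" where "Vd = A0 @ A1 @ A2 @ A3 @ A4"

definition Gd :: "nat list list" where "Gd = G0 @ G1 @ G2 @ G3 @ G4"

definition Td :: "nat list" where "Td = [6,6,16,23,16,17,16,17,12,12,12,19,25,25,17,17,20,12,12,12,13,13,18,13,13]"

definition sd :: "nat list" where "sd = [11,13,12,10,10,6,15,15,15,14,14,5,6,10,12,15,8,8,14,14,7,15,15,11,13]"

lemma Vd_lit: "Vd = [w0, w1, w2, w3, w4, w5, w6, w7, w8, w9, w10, w11, w12, w13, w14, w15, w16, w17, w18, w19, w20, w21, w22, w23, w24]"
  by (simp add: Vd_def A0_def A1_def A2_def A3_def A4_def)

lemma Vd_nth: "Vd ! 0 = w0"
  "Vd ! 1 = w1"
  "Vd ! 2 = w2"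
  "Vd ! 3 = w3"
  "Vd ! 4 = w4"
  "Vd ! 5 = w5"
  "Vd ! 6 = w6"
  "Vd ! 7 = w7"
  "Vd ! 8 = w8"
  "Vd ! 9 = w9"
  "Vd ! 10 = w10"
  "Vd ! 11 = w11"
  "Vd ! 12 = w12"
  "Vd ! 13 = w13"
  "Vd ! 14 = w14"
  "Vd ! 15 = w15"
  "Vd ! 16 = w16"
  "Vd ! 17 = w17"
  "Vd ! 18 = w18"
  "Vd ! 19 = w19"
  "Vd ! 20 = w20"
  "Vd ! 21 = w21"
  "Vd ! 22 = w22"
  "Vd ! 23 = w23"
  "Vd ! 24 = w24"
  "Vd ! Suc 0 = w1"
  by (simp_all add: Vd_lit)


definition qchk :: "nat \<Rightarrow> nat list \<Rightarrow> nat \<Rightarrow> bool" where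
  "qchk x vx y \<longleftrightarrow> y < 25 \<and> y \<noteq> x \<and> nocen4 (vx @ Vd!y @ [0,1,2,0])
     \<and> lcs vx (Vd!y) + Td!y < 29 \<and> lcp vx (Vd!y) \<le> Td!x"


lemma R0: "rowsc qchk 0 [w0, w1, w2, w3, w4] [[2,3,5,6,7,8,9,10,11,13,14,15,16,17,18,19,20,21,22,23,24], [2,3,4,5,6,7,8,9,10,11,12,13,14,15,16,17,18,19,20,22,23], [0,1,4,5,6,7,8,9,10,11,12,15,16,17,18,19,20,21,22,23,24], [2,4,5,6,7,8,9,10,11,12,14,15,16,17,18,19,20,21,22,23,24], [0,1,2,3,8,9,10,11,12,13,14,15,16,17,18,19,20,21,22,23,24]]"
  by (simp add: qchk_def Vd_nth wdefs nocen4_def lcs_def Td_def)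

lemma R1: "rowsc qchk 5 [w5, w6, w7, w8, w9] [[0,1,2,3,6,8,9,10,11,12,14,15,16,17,18,19,20,21,22,23,24], [0,1,2,3,8,9,10,11,12,13,14,15,16,17,18,19,20,21,22,23,24], [0,1,2,3,4,5,8,9,10,11,13,14,15,16,17,18,19,20,21,23,24], [0,1,2,3,4,5,6,7,11,12,13,14,16,17,18,19,20,21,22,23,24], [0,1,2,3,4,5,6,7,11,12,14,15,16,17,18,19,20,21,22,23,24]]"
  by (simp add: qchk_def Vd_nth wdefs nocen4_def lcs_def Td_def)

lemma R2: "rowsc qchk 10 [w10, w11, w12, w13, w14] [[0,1,2,3,4,5,6,7,11,12,13,14,15,17,18,19,20,21,22,23,24], [0,1,2,3,4,5,6,7,8,9,10,12,13,14,15,16,20,21,22,23,24], [0,1,2,3,4,5,6,7,11,13,14,15,16,17,18,19,20,21,22,23,24], [2,4,5,6,7,8,9,10,11,12,14,15,16,17,18,19,20,21,22,23,24], [0,1,2,3,4,5,6,7,8,9,10,11,12,17,18,19,20,21,22,23,24]]"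
  by (simp add: qchk_def Vd_nth wdefs nocen4_def lcs_def Td_def)

lemma R3: "rowsc qchk 15 [w15, w16, w17, w18, w19] [[0,1,2,3,4,5,6,7,8,9,10,11,12,17,18,19,20,21,22,23,24], [2,3,4,5,6,7,8,9,10,11,12,13,14,17,18,19,20,21,22,23,24], [0,1,2,3,4,5,6,7,8,9,10,11,12,13,14,15,16,20,21,22,23], [0,1,2,3,4,5,6,7,8,9,10,11,12,14,15,16,20,21,22,23,24], [0,1,2,3,4,5,6,7,8,9,10,11,12,13,14,15,16,20,21,22,23]]"
  by (simp add: qchk_def Vd_nth wdefs nocen4_def lcs_def Td_def)

lemma R4: "rowsc qchk 20 [w20, w21, w22, w23, w24] [[0,1,2,3,4,5,6,7,8,9,10,11,12,13,14,15,16,17,18,19,23], [0,1,2,3,4,5,7,8,9,10,11,12,13,14,15,16,17,18,19,23,24], [0,1,2,3,4,5,6,8,9,10,11,13,14,15,16,17,18,19,20,23,24], [0,1,2,3,4,5,6,7,8,9,10,11,13,14,15,16,17,18,19,20,21], [2,3,4,5,6,7,8,9,10,11,12,13,14,15,16,17,18,19,20,21,22]]"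
  by (simp add: qchk_def Vd_nth wdefs nocen4_def lcs_def Td_def)



definition chkw :: "nat list \<Rightarrow> bool" where
  "chkw v \<longleftrightarrow> length v = 29 \<and> take 5 v = [0,1,2,0,2] \<and> set v \<subseteq> {0,1,2}
     \<and> d2 [0,1,2,0,2] (tl (v @ [0,1,2,0])) \<and> sqc (v @ [0,1,2,0])"

lemma K1: "list_all chkw Vd"
  by (simp add: Vd_lit wdefs chkw_def sqc_def)

lemma K2: "distinct Vd"
  by (simp add: Vd_lit wdefs)

lemma K3: "list_all (\<lambda>g. distinct g \<and> 21 \<le> length g) Gd"
  by (simp add: Gd_def G0_def G1_def G2_def G3_def G4_def)

lemma K5: "chkall (\<lambda>x. chkall (\<lambda>y. x = y \<or> lcs (Vd!x) (Vd!y) \<le> sd!y) 25) 25"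
  by (simp add: Vd_nth wdefs lcs_def sd_def)

lemma K6: "chkall (\<lambda>y. length (filter (\<lambda>w. take (29 - sd!y) w = take (29 - sd!y) (Vd!y)) Vd) \<le> 6) 25"
  by (simp add: Vd_nth Vd_lit wdefs sd_def)


lemma fekete:
  fixes x :: "nat \<Rightarrow> real"
  assumes sub: "\<And>m n. x (m+n) \<le> x m + x n" and nn: "\<And>n. 0 \<le> x n"
  shows "(\<lambda>n. x n / real n) \<longlonglongrightarrow> (INF n\<in>{1..}. x n / real n)"
proof -
  define l where "l = (INF n\<in>{1..}. x n / real n)"
  have bdd: "bdd_below ((\<lambda>n. x n / real n) ` {1..})"
    by (rule bdd_belowI[of _ 0]) (auto intro: divide_nonneg_nonneg nn)
  have low: "\<And>n. 1 \<le> n \<Longrightarrow> l \<le> x n / real n" unfolding l_def by (rule cINF_lower[OF bdd]) simp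
  have mult: "\<And>m q r. x (q*m + r) \<le> real q * x m + x r"
  proof -
    fix m q r show "x (q*m + r) \<le> real q * x m + x r"
    proof (induction q)
      case 0 then show ?case by simp
    next
      case (Suc q)
      have "x (Suc q * m + r) = x (m + (q*m + r))" by (simp add: add.assoc)
      also have "\<dots> \<le> x m + x (q*m + r)" by (rule sub)
      also have "\<dots> \<le> x m + (real q * x m + x r)" using Suc by simp
      finally show ?case by (simp add: algebra_simps)
    qed
  qed
  show ?thesis unfolding l_def[symmetric]
  proof (rule LIMSEQ_I)
    fix e :: real assume e: "0 < e"
    have "\<exists>y\<in>(\<lambda>n. x n / real n) ` {1..}. y < l + e/2"
      using cInf_lessD[of "(\<lambda>n. x n / real n) ` {1..}" "l + e/2"] e unfolding l_def by auto
    then obtain m where m: "1 \<le> m" "x m / real m < l + e/2" by auto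
    define C where "C = Max (x ` {..<m})"
    have C: "\<And>r. r < m \<Longrightarrow> x r \<le> C" unfolding C_def by (rule Max_ge) auto
    have C0: "0 \<le> C" using C[of 0] nn[of 0] m by simp
    define N0 where "N0 = nat \<lceil>2 * C / e\<rceil> + 1"
    show "\<exists>no. \<forall>n\<ge>no. norm (x n / real n - l) < e"
    proof (intro exI allI impI)
      fix n assume n: "N0 \<le> n"
      have n1: "1 \<le> n" using n N0_def by simp
      have npos: "0 < real n" using n1 by simp
      have nbig: "2 * C / e < real n"
      proof -
        have "2 * C / e \<le> real (nat \<lceil>2 * C / e\<rceil>)" by linarith
        also have "\<dots> < real N0" unfolding N0_def by simp
        also have "\<dots> \<le> real n" using n by simp
        finally show ?thesis .
      qed
      define q r where "q = n div m" and "r = n mod m"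
      have nqr: "n = q*m + r" unfolding q_def r_def by simp
      have rm: "r < m" unfolding r_def using m by simp
      have xn: "x n \<le> real q * x m + C" using mult[of q m r] C[OF rm] nqr by simp
      have qm: "real q * real m \<le> real n" using nqr by (simp flip: of_nat_mult)
      have "real q * x m = (real q * real m) * (x m / real m)" using m by (simp add: field_simps)
      also have "\<dots> \<le> real n * (x m / real m)" using qm nn[of m] m by (intro mult_right_mono) auto
      finally have "real q * x m \<le> real n * (x m / real m)" .
      then have "x n \<le> real n * (x m / real m) + C" using xn by simp
      then have "x n / real n \<le> x m / real m + C / real n" using npos by (simp add: field_simps)
      moreover have "C / real n < e / 2" using nbig e npos by (simp add: field_simps)
      ultimately have up: "x n / real n < l + e" using m by linarith
      have "l \<le> x n / real n" using low[OF n1] .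
      then show "norm (x n / real n - l) < e" using up by simp
    qed
  qed
qed


definition SF :: "nat \<Rightarrow> nat list set" where
  "SF k = {w :: nat list. length w = k \<and> set w \<subseteq> {0,1,2} \<and> square_free w}"

lemma sqfree_count_SF: "sqfree_count k = card (SF k)"
  unfolding sqfree_count_def SF_def by simp

lemma finite_SF: "finite (SF k)"
  unfolding SF_def by (rule finite_subset[OF _ finite_lists_length_eq[of "{0::nat,1,2}" k]]) auto

lemma sqfree_submult: "sqfree_count (m+n) \<le> sqfree_count m * sqfree_count n"
proof -
  define f where "f = (\<lambda>w::nat list. (take m w, drop m w))"
  have "card (SF (m+n)) \<le> card (SF m \<times> SF n)"
  proof (rule card_inj_on_le)
    show "inj_on f (SF (m+n))" unfolding f_def inj_on_def by (metis append_take_drop_id prod.inject)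
    show "f ` SF (m+n) \<subseteq> SF m \<times> SF n"
    proof
      fix y assume "y \<in> f ` SF (m+n)"
      then obtain w where w: "w \<in> SF (m+n)" and y: "y = (take m w, drop m w)" unfolding f_def by auto
      have "square_free (take m w @ drop m w)" using w by (simp add: SF_def)
      then have "square_free (take m w)" "square_free (drop m w)" using sf_append by blast+
      moreover have "set (take m w) \<subseteq> {0,1,2}" "set (drop m w) \<subseteq> {0,1,2}"
        using w by (auto simp: SF_def dest: in_set_takeD in_set_dropD)
      ultimately show "y \<in> SF m \<times> SF n" using w y by (simp add: SF_def)
    qed
    show "finite (SF m \<times> SF n)" using finite_SF by simp
  qed
  then show ?thesis by (simp add: sqfree_count_SF card_cartesian_product)
qed

lemma sqfree_pos:
  assumes L: "0 < L" and pos: "\<And>n. 0 < sqfree_count (n*L)"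
  shows "0 < sqfree_count n"
proof -
  have "SF (n*L) \<noteq> {}" using pos[of n] by (auto simp: sqfree_count_SF)
  then obtain w where w: "w \<in> SF (n*L)" by auto
  have nl: "n \<le> n*L" using L by simp
  have "square_free (take n w @ drop n w)" using w by (simp add: SF_def)
  then have "square_free (take n w)" using sf_append by blast
  moreover have "set (take n w) \<subseteq> {0,1,2}" using w by (auto simp: SF_def dest: in_set_takeD)
  moreover have "length (take n w) = n" using w nl by (simp add: SF_def)
  ultimately have "take n w \<in> SF n" by (simp add: SF_def)
  then have "SF n \<noteq> {}" by auto
  then show ?thesis using finite_SF by (simp add: sqfree_count_SF card_gt_0_iff)
qed

lemma final_from_bound:
  fixes \<beta> :: real and L :: nat
  assumes L: "0 < L" and b: "1 < \<beta>" and bound: "\<And>n. \<beta>^n \<le> real (sqfree_count (n*L))"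
    and cmp: "(65::real)^L \<le> \<beta>^40"
  shows "65 powr (1/40) \<le> growth_rate"
proof -
  define a where "a n = real (sqfree_count n)" for n
  have pos0: "\<And>n. 0 < sqfree_count (n*L)"
  proof -
    fix n
    have "1 \<le> \<beta>^n" using b by simp
    then have "1 \<le> real (sqfree_count (n*L))" using bound[of n] by linarith
    then show "0 < sqfree_count (n*L)" by simp
  qed
  have a1: "\<And>n. 1 \<le> a n" unfolding a_def using sqfree_pos[OF L pos0] by (simp add: Suc_le_eq)
  have apos: "\<And>n. 0 < a n" using a1 by (metis less_le_trans zero_less_one)
  define x where "x n = ln (a n)" for n
  have xnn: "\<And>n. 0 \<le> x n" unfolding x_def using a1 by simp
  have xsub: "\<And>m n. x (m+n) \<le> x m + x n"
  proof -
    fix m n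
    have "a (m+n) \<le> a m * a n" unfolding a_def using sqfree_submult[of m n] by (simp flip: of_nat_mult)
    then have "ln (a (m+n)) \<le> ln (a m * a n)" using apos by simp
    moreover have "ln (a m * a n) = ln (a m) + ln (a n)" using apos[of m] apos[of n] by (simp add: ln_mult)
    ultimately show "x (m+n) \<le> x m + x n" unfolding x_def by simp
  qed
  define l where "l = (INF n\<in>{1..}. x n / real n)"
  have lim: "(\<lambda>n. x n / real n) \<longlonglongrightarrow> l" unfolding l_def by (rule fekete[OF xsub xnn])
  have seq: "(\<lambda>n. real (sqfree_count n) powr (1 / real n)) = (\<lambda>n. exp (x n / real n))"
  proof
    fix n
    have "a n \<noteq> 0" using apos[of n] by simp
    then show "real (sqfree_count n) powr (1 / real n) = exp (x n / real n)"
      unfolding x_def powr_def a_def[symmetric] by simp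
  qed
  have "(\<lambda>n. exp (x n / real n)) \<longlonglongrightarrow> exp l" by (rule tendsto_exp[OF lim])
  then have gr: "growth_rate = exp l" unfolding growth_rate_def seq by (rule limI)
  have sm: "strict_mono (\<lambda>k. Suc k * L)" using L by (simp add: strict_mono_def)
  have sub: "(\<lambda>k. x (Suc k * L) / real (Suc k * L)) \<longlonglongrightarrow> l"
    using LIMSEQ_subseq_LIMSEQ[OF lim sm] by (simp add: o_def)
  have lb: "\<And>k. ln \<beta> / real L \<le> x (Suc k * L) / real (Suc k * L)"
  proof -
    fix k
    have "\<beta>^(Suc k) \<le> a (Suc k * L)" using bound unfolding a_def by blast
    moreover have "0 < \<beta>^(Suc k)" using b by simp
    ultimately have "ln (\<beta>^(Suc k)) \<le> x (Suc k * L)" unfolding x_def using apos[of "Suc k * L"] by (simp only: ln_le_cancel_iff)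
    moreover have "ln (\<beta>^(Suc k)) = real (Suc k) * ln \<beta>" by (rule ln_realpow)
    ultimately have A: "real (Suc k) * ln \<beta> \<le> x (Suc k * L)" by linarith
    have d: "real (Suc k * L) = real (Suc k) * real L" by (simp only: of_nat_mult)
    have "real (Suc k) * ln \<beta> / real (Suc k * L) \<le> x (Suc k * L) / real (Suc k * L)"
      by (rule divide_right_mono) (use A in simp_all)
    moreover have "real (Suc k) * ln \<beta> / real (Suc k * L) = ln \<beta> / real L"
      unfolding d using L by (simp del: of_nat_Suc)
    ultimately show "ln \<beta> / real L \<le> x (Suc k * L) / real (Suc k * L)" by simp
  qed
  have l1: "ln \<beta> / real L \<le> l" by (rule LIMSEQ_le_const[OF sub]) (use lb in blast)
  have "ln ((65::real)^L) \<le> ln (\<beta>^40)" using cmp b by (subst ln_le_cancel_iff) auto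
  then have "real L * ln 65 \<le> 40 * ln \<beta>" using b by (simp add: ln_realpow)
  then have "ln 65 / 40 \<le> ln \<beta> / real L" using L by (simp add: field_simps)
  then have "ln 65 / 40 \<le> l" using l1 by linarith
  then have "exp (ln 65 / 40) \<le> exp l" by simp
  moreover have "(65::real) powr (1/40) = exp (ln 65 / 40)" by (simp add: powr_def)
  ultimately show ?thesis using gr by simp
qed

lemma numeric: "(1.109999::real) < 65 powr (1/40)"
proof -
  have "(1.109999::real)^40 < 65" by (simp add: power_divide)
  then have "ln ((1.109999::real)^40) < ln 65" by (subst ln_less_cancel_iff) auto
  then have "40 * ln (1.109999::real) < ln 65" by (simp add: ln_realpow)
  then have "ln (1.109999::real) < ln 65 / 40" by linarith
  then have lt: "exp (ln (1.109999::real)) < exp (ln 65 / 40)" by (simp only: exp_less_cancel_iff)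
  have "(65::real) powr (1/40) = exp (ln 65 / 40)" by (simp add: powr_def)
  moreover have "exp (ln (1.109999::real)) = 1.109999" by (rule exp_ln) simp
  ultimately show ?thesis using lt by linarith
qed


lemma rowsc_app_I: "rowsc Q x a c \<Longrightarrow> rowsc Q y b d \<Longrightarrow> y = x + length a \<Longrightarrow> length a = length c \<Longrightarrow> rowsc Q x (a@b) (c@d)"
  using rowsc_append by simp

lemma K4: "rowsc qchk 0 Vd Gd"
proof -
  have l: "length A0 = 5" "length A1 = 5" "length A2 = 5" "length A3 = 5"
       "length G0 = 5" "length G1 = 5" "length G2 = 5" "length G3 = 5"
    by (simp_all add: A0_def A1_def A2_def A3_def G0_def G1_def G2_def G3_def)
  have r0: "rowsc qchk 0 A0 G0" using R0 unfolding A0_def G0_def .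
  have r1: "rowsc qchk 5 A1 G1" using R1 unfolding A1_def G1_def .
  have r2: "rowsc qchk 10 A2 G2" using R2 unfolding A2_def G2_def .
  have r3: "rowsc qchk 15 A3 G3" using R3 unfolding A3_def G3_def .
  have r4: "rowsc qchk 20 A4 G4" using R4 unfolding A4_def G4_def .
  have r34: "rowsc qchk 15 (A3 @ A4) (G3 @ G4)" by (rule rowsc_app_I[OF r3 r4]) (simp_all add: l)
  have r24: "rowsc qchk 10 (A2 @ A3 @ A4) (G2 @ G3 @ G4)" by (rule rowsc_app_I[OF r2 r34]) (simp_all add: l)
  have r14: "rowsc qchk 5 (A1 @ A2 @ A3 @ A4) (G1 @ G2 @ G3 @ G4)" by (rule rowsc_app_I[OF r1 r24]) (simp_all add: l)
  have r04: "rowsc qchk 0 (A0 @ A1 @ A2 @ A3 @ A4) (G0 @ G1 @ G2 @ G3 @ G4)" by (rule rowsc_app_I[OF r0 r14]) (simp_all add: l)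
  then show ?thesis unfolding Vd_def Gd_def .
qed

lemma lenVd: "length Vd = 25" by (simp add: Vd_lit)
lemma lenGd: "length Gd = 25" by (simp add: Gd_def G0_def G1_def G2_def G3_def G4_def)

lemma qchk_at: "x < 25 \<Longrightarrow> y \<in> set (Gd!x) \<Longrightarrow> qchk x (Vd!x) y"
  using rowsc_sound[OF K4, of x y] lenVd lenGd by simp

lemma chkw_at: "i < 25 \<Longrightarrow> chkw (Vd!i)"
  using K1 lenVd by (simp add: list_all_length)

lemma inst: "blk Vd Gd Td sd 29 5 21 6 [0,1,2,0,2]"
proof (unfold_locales, goal_cases)
  case (1 i) then show ?case using chkw_at lenVd by (simp add: chkw_def)
next
  case 2 then show ?case by simp
next
  case 3 then show ?case by simp
next
  case 4 then show ?case by simp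
next
  case (5 i) then show ?case using chkw_at lenVd by (simp add: chkw_def)
next
  case (6 i p)
  have c: "chkw (Vd!i)" using 6 chkw_at lenVd by simp
  let ?xs = "Vd!i @ [0,1,2,0]"
  have d: "d2 [0,1,2,0,2] (tl ?xs)" and lv: "length (Vd!i) = 29" using c by (simp_all add: chkw_def)
  have pl: "p - 1 < length (tl ?xs)" using 6 lv by simp
  have np: "\<not> peq 5 [0,1,2,0,2] (drop (p - 1) (tl ?xs))" by (rule d2_sound[OF d pl])
  have dd: "drop (p - 1) (tl ?xs) = drop p ?xs" using 6 by (simp add: drop_Suc[symmetric] drop_tl)
  show ?case
  proof
    assume "take 5 (drop p (Vd ! i @ take (5 - 1) [0, 1, 2, 0, 2])) = [0, 1, 2, 0, 2]"
    then have t: "take 5 (drop p ?xs) = [0,1,2,0,2]" by simp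
    have "5 \<le> length (drop p ?xs)" using 6 lv by simp
    then have "peq 5 [0,1,2,0,2] (drop p ?xs)" using t by (simp add: peq_iff)
    then show False using np dd by simp
  qed
next
  case (7 i) then show ?case using chkw_at[of i] lenVd sqc_sound by (simp add: chkw_def)
next
  case (8 x y) then show ?case using qchk_at[of x y] lenVd by (simp add: qchk_def)
next
  case (9 x y d l)
  have q: "qchk x (Vd!x) y" using 9 qchk_at lenVd by simp
  have yl: "y < 25" and n4: "nocen4 (Vd!x @ Vd!y @ [0,1,2,0])" using q by (simp_all add: qchk_def)
  have lx: "length (Vd!x) = 29" "length (Vd!y) = 29" using chkw_at[of x] chkw_at[of y] 9 yl lenVd by (simp_all add: chkw_def)
  have len: "length (Vd!x @ Vd!y @ [0,1,2,0]) = 62" using lx by simp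
  have "nocen (Vd!x @ Vd!y @ [0,1,2,0]) (30 + (d - 1))" by (rule nocen4_sound[OF n4 len]) (use 9 in simp)
  moreover have "30 + (d - 1) = 29 + d" using 9 by simp
  ultimately have nc: "nocen (Vd!x @ Vd!y @ [0,1,2,0]) (29 + d)" by simp
  have "\<not> (\<forall>t<l. (Vd!x @ Vd!y @ [0,1,2,0])!(29+d-l+t) = (Vd!x @ Vd!y @ [0,1,2,0])!(29+d+t))"
    by (rule nocen_sound[OF nc]) (use 9 len in simp_all)
  then show ?case by simp
next
  case 10 then show ?case using K2 .
next
  case (11 x)
  have "x < length Gd" using 11 lenVd lenGd by simp
  then show ?case using K3 by (simp add: list_all_length)
next
  case 12 then show ?case using lenVd by simp
next
  case (13 y z) then show ?case using qchk_at[of y z] lenVd by (simp add: qchk_def)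
next
  case (14 x y) then show ?case using qchk_at[of x y] lenVd by (simp add: qchk_def)
next
  case (15 x y)
  have A: "chkall (\<lambda>y. x = y \<or> lcs (Vd!x) (Vd!y) \<le> sd!y) 25" using chkall_sound[OF K5, of x] 15 lenVd by simp
  have "(\<lambda>y. x = y \<or> lcs (Vd!x) (Vd!y) \<le> sd!y) y" by (rule chkall_sound[OF A]) (use 15 lenVd in simp)
  then show ?case using 15 by simp
next
  case (16 y)
  have "length (filter (\<lambda>w. take (29 - sd!y) w = take (29 - sd!y) (Vd!y)) Vd) \<le> 6"
    using chkall_sound[OF K6, of y] 16 lenVd by simp
  then show ?case by (simp add: length_filter_conv_card)
next
  case (17 i) then show ?case using chkw_at lenVd by (simp add: chkw_def)
qed

theorem mainTheorem11:
  shows "growth_rate \<ge> 65 powr (1/40) \<and> 65 powr (1/40) > (1.109999 :: real)"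
proof
  have b1: "1 < (413/20::real)" by simp
  have bd: "(413/20::real) \<le> real 21 - real 6 / (413/20 - 1)" by simp
  have g: "\<And>n. (413/20::real)^n \<le> real (sqfree_count (n * 29))"
    using blk.growth[OF inst b1 bd] by simp
  have cmp: "(65::real)^29 \<le> (413/20)^40" by (simp add: power_divide)
  show "growth_rate \<ge> 65 powr (1/40)" by (rule final_from_bound[OF _ b1 g cmp]) simp
  show "65 powr (1/40) > (1.109999 :: real)" by (rule numeric)
qed


end
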